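(* Let $f,g_1,\dots,g_m,h_1,\dots,h_l\in\mathbb{R}[\mathbf{x}]$ and assume $R-\|\mathbf{x}\|_2^2\in\{g_1,\dots,g_m\}$ for some $R>0$. Then for every integer $k\ge k_{\min}$ the SOS semidefinite program $(\mathrm{SOS}_k)$ satisfies Slater's condition, i.e. there exist $\xi\in\mathbb{R}$, real symmetric positive definite matrices $\mathbf{G}_0$ (size $s(k)$), $\mathbf{G}_i$ (size $s(k-\lceil g_i\rceil)$, $i\in[m]$) and vectors $\mathbf{u}_j\in\mathbb{R}^{s(2(k-\lceil h_j\rceil))}$ satisfying its polynomial identity constraint. As a consequence, strong duality holds between $(\mathrm{SOS}_k)$ and $(\mathrm{MOM}_k)$, i.e. $\rho_k=\tau_k$, for every integer $k\ge k_{\min}$.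
   Context: $\mathbf{x}=(x_1,\dots,x_n)$; $\lceil p\rceil:=\lceil\deg(p)/2\rceil$; $\mathbb{N}^n_d:=\{\alpha\in\mathbb{N}^n:|\alpha|\le d\}$; $s(d):=\binom{n+d}{n}$; $\mathbf{v}_d=(\mathbf{x}^\alpha)_{\alpha\in\mathbb{N}^n_d}$; $k_{\min}:=\max\{\lceil f\rceil,\lceil g_i\rceil,\lceil h_j\rceil\}$. $(\mathrm{SOS}_k)$: $\rho_k:=\sup\{\xi:\ \mathbf{G}_i\succeq0,\ f-\xi=\mathbf{v}_k^\top\mathbf{G}_0\mathbf{v}_k+\sum_{i\in[m]}g_i\mathbf{v}_{k-\lceil g_i\rceil}^\top\mathbf{G}_i\mathbf{v}_{k-\lceil g_i\rceil}+\sum_{j\in[l]}h_j\mathbf{v}_{2(k-\lceil h_j\rceil)}^\top\mathbf{u}_j\}$, the supremum over $\xi\in\mathbb{R}$, symmetric $\mathbf{G}_0$ of size $s(k)$, $\mathbf{G}_i$ of size $s(k-\lceil g_i\rceil)$, and $\mathbf{u}_j\in\mathbb{R}^{s(2(k-\lceil h_j\rceil))}$, the equality being an identity of polynomials. $(\mathrm{MOM}_k)$: $\tau_k:=\inf\{L_{\mathbf{y}}(f):\ \mathbf{y}\in\mathbb{R}^{s(2k)},\ \mathbf{M}_k(\mathbf{y})\succeq0,\ y_{\mathbf{0}}=1,\ \mathbf{M}_{k-\lceil g_i\rceil}(g_i\mathbf{y})\succeq0\ (i\in[m]),\ \mathbf{M}_{k-\lceil h_j\rceil}(h_j\mathbf{y})=0\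 (j\in[l])\}$, where $\mathbf{y}=(y_\alpha)_{\alpha\in\mathbb{N}^n_{2k}}$, $L_{\mathbf{y}}(\sum_\alpha p_\alpha\mathbf{x}^\alpha)=\sum_\alpha p_\alpha y_\alpha$, $\mathbf{M}_d(\mathbf{y})=(y_{\alpha+\beta})_{\alpha,\beta\in\mathbb{N}^n_d}$, $\mathbf{M}_d(q\mathbf{y})=(\sum_\gamma q_\gamma y_{\alpha+\beta+\gamma})_{\alpha,\beta\in\mathbb{N}^n_d}$. *)

theory Defs
  imports "HOL-Library.Poly_Mapping" "HOL-Library.Extended_Real"
begin

(* Multivariate real polynomials: a monomial x^alpha is an exponent vector
   alpha :: nat =>0 nat (variable index => exponent), and a polynomial is a
   finitely supported map from monomials to real coefficients; multiplication
   is the convolution product of Poly_Mapping. *)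
type_synonym monom = "nat \<Rightarrow>\<^sub>0 nat"
type_synonym mpoly = "monom \<Rightarrow>\<^sub>0 real"

definition mdeg :: "monom \<Rightarrow> nat" where
  "mdeg \<alpha> = (\<Sum>i\<in>Poly_Mapping.keys \<alpha>. Poly_Mapping.lookup \<alpha> i)"

(* total degree (degree of zero polynomial = 0) *)
definition pdeg :: "mpoly \<Rightarrow> nat" where
  "pdeg p = Max (insert 0 (mdeg ` Poly_Mapping.keys p))"

(* \<lceil>p\<rceil> = \<lceil>deg p / 2\<rceil> *)
definition hdeg :: "mpoly \<Rightarrow> nat" where
  "hdeg p = (pdeg p + 1) div 2"

definition in_vars :: "nat \<Rightarrow> mpoly \<Rightarrow> bool" where
  "in_vars n p \<longleftrightarrow> (\<forall>\<alpha>\<in>Poly_Mapping.keys p. Poly_Mapping.keys \<alpha> \<subseteq> {..<n})"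

definition monset :: "nat \<Rightarrow> nat \<Rightarrow> monom set" where
  "monset n d = {\<alpha>. Poly_Mapping.keys \<alpha> \<subseteq> {..<n} \<and> mdeg \<alpha> \<le> d}"

definition xmon :: "monom \<Rightarrow> mpoly" where
  "xmon \<alpha> = Poly_Mapping.single \<alpha> 1"

definition const :: "real \<Rightarrow> mpoly" where
  "const c = Poly_Mapping.single 0 c"

definition sqnorm :: "nat \<Rightarrow> mpoly" where
  "sqnorm n = (\<Sum>i<n. xmon (Poly_Mapping.single i 2))"

(* v_d^T G v_d, G indexed by N^n_d x N^n_d *)
definition gram :: "nat \<Rightarrow> nat \<Rightarrow> (monom \<Rightarrow> monom \<Rightarrow> real) \<Rightarrow> mpoly" where
  "gram n d G = (\<Sum>\<alpha>\<in>monset n d. \<Sum>\<beta>\<in>monset n d. Poly_Mapping.single (\<alpha> + \<beta>) (G \<alpha> \<beta>))"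

definition lin :: "nat \<Rightarrow> nat \<Rightarrow> (monom \<Rightarrow> real) \<Rightarrow> mpoly" where
  "lin n d u = (\<Sum>\<alpha>\<in>monset n d. Poly_Mapping.single \<alpha> (u \<alpha>))"

definition symm_on :: "monom set \<Rightarrow> (monom \<Rightarrow> monom \<Rightarrow> real) \<Rightarrow> bool" where
  "symm_on A G \<longleftrightarrow> (\<forall>\<alpha>\<in>A. \<forall>\<beta>\<in>A. G \<alpha> \<beta> = G \<beta> \<alpha>)"

definition psd_on :: "monom set \<Rightarrow> (monom \<Rightarrow> monom \<Rightarrow> real) \<Rightarrow> bool" where
  "psd_on A G \<longleftrightarrow> symm_on A G \<and>
     (\<forall>c. (\<Sum>\<alpha>\<in>A. \<Sum>\<beta>\<in>A. c \<alpha> * G \<alpha> \<beta> * c \<beta>) \<ge> 0)"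

definition pd_on :: "monom set \<Rightarrow> (monom \<Rightarrow> monom \<Rightarrow> real) \<Rightarrow> bool" where
  "pd_on A G \<longleftrightarrow> symm_on A G \<and>
     (\<forall>c. (\<exists>\<alpha>\<in>A. c \<alpha> \<noteq> 0) \<longrightarrow> (\<Sum>\<alpha>\<in>A. \<Sum>\<beta>\<in>A. c \<alpha> * G \<alpha> \<beta> * c \<beta>) > 0)"

definition kmin :: "mpoly \<Rightarrow> (nat \<Rightarrow> mpoly) \<Rightarrow> nat \<Rightarrow> (nat \<Rightarrow> mpoly) \<Rightarrow> nat \<Rightarrow> nat" where
  "kmin f g m h l = Max ({hdeg f} \<union> hdeg ` g ` {..<m} \<union> hdeg ` h ` {..<l})"

definition sos_cert ::
  "nat \<Rightarrow> mpoly \<Rightarrow> (nat \<Rightarrow> mpoly) \<Rightarrow> nat \<Rightarrow> (nat \<Rightarrow> mpoly) \<Rightarrow> nat \<Rightarrow> nat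
   \<Rightarrow> real \<Rightarrow> (nat \<Rightarrow> monom \<Rightarrow> monom \<Rightarrow> real) \<Rightarrow> (nat \<Rightarrow> monom \<Rightarrow> real) \<Rightarrow> bool" where
  "sos_cert n f g m h l k \<xi> G u \<longleftrightarrow>
     f - const \<xi> = gram n k (G 0)
       + (\<Sum>i<m. g i * gram n (k - hdeg (g i)) (G (Suc i)))
       + (\<Sum>j<l. h j * lin n (2 * (k - hdeg (h j))) (u j))"

(* G 0 = G_0, G (Suc i) = G_{i+1} for the i-th constraint g i *)
definition rho ::
  "nat \<Rightarrow> mpoly \<Rightarrow> (nat \<Rightarrow> mpoly) \<Rightarrow> nat \<Rightarrow> (nat \<Rightarrow> mpoly) \<Rightarrow> nat \<Rightarrow> nat \<Rightarrow> ereal" where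
  "rho n f g m h l k = Sup (ereal ` {\<xi>. \<exists>G u.
      psd_on (monset n k) (G 0) \<and>
      (\<forall>i<m. psd_on (monset n (k - hdeg (g i))) (G (Suc i))) \<and>
      sos_cert n f g m h l k \<xi> G u})"

definition Lfun :: "(monom \<Rightarrow> real) \<Rightarrow> mpoly \<Rightarrow> real" where
  "Lfun y p = (\<Sum>\<alpha>\<in>Poly_Mapping.keys p. Poly_Mapping.lookup p \<alpha> * y \<alpha>)"

definition locm :: "mpoly \<Rightarrow> (monom \<Rightarrow> real) \<Rightarrow> monom \<Rightarrow> monom \<Rightarrow> real" where
  "locm q y \<alpha> \<beta> = (\<Sum>\<gamma>\<in>Poly_Mapping.keys q. Poly_Mapping.lookup q \<gamma> * y (\<alpha> + \<beta> + \<gamma>))"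

(* y ranges over R^{s(2k)}, realised as a function monom => real of which only
   the entries indexed by N^n_{2k} are used *)
definition tau ::
  "nat \<Rightarrow> mpoly \<Rightarrow> (nat \<Rightarrow> mpoly) \<Rightarrow> nat \<Rightarrow> (nat \<Rightarrow> mpoly) \<Rightarrow> nat \<Rightarrow> nat \<Rightarrow> ereal" where
  "tau n f g m h l k = Inf (ereal ` {Lfun y f | y.
      psd_on (monset n k) (\<lambda>\<alpha> \<beta>. y (\<alpha> + \<beta>)) \<and>
      y 0 = 1 \<and>
      (\<forall>i<m. psd_on (monset n (k - hdeg (g i))) (locm (g i) y)) \<and>
      (\<forall>j<l. \<forall>\<alpha>\<in>monset n (k - hdeg (h j)). \<forall>\<beta>\<in>monset n (k - hdeg (h j)).
           locm (h j) y \<alpha> \<beta> = 0)})"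

end

theory Submission
  imports Defs
begin


lemma poly_decomp: "(p::mpoly) = (\<Sum>\<gamma>\<in>Poly_Mapping.keys p. Poly_Mapping.single \<gamma> (Poly_Mapping.lookup p \<gamma>))"
proof (rule poly_mapping_eqI)
  fix k
  show "Poly_Mapping.lookup p k = Poly_Mapping.lookup (\<Sum>\<gamma>\<in>Poly_Mapping.keys p. Poly_Mapping.single \<gamma> (Poly_Mapping.lookup p \<gamma>)) k"
    unfolding lookup_sum lookup_single
    by (cases "k \<in> Poly_Mapping.keys p") (auto simp: when_def in_keys_iff)
qed

lemma Lfun_superset:
  assumes "finite A" "Poly_Mapping.keys p \<subseteq> A"
  shows "Lfun y p = (\<Sum>\<alpha>\<in>A. Poly_Mapping.lookup p \<alpha> * y \<alpha>)"
  unfolding Lfun_def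
  by (rule sum.mono_neutral_left) (use assms in \<open>auto simp: in_keys_iff\<close>)

lemma Lfun_add: "Lfun y (p + q) = Lfun y p + Lfun y q"
proof -
  let ?A = "Poly_Mapping.keys p \<union> Poly_Mapping.keys q"
  have "Poly_Mapping.keys (p+q) \<subseteq> ?A" by (rule keys_add)
  then show ?thesis
    by (simp add: Lfun_superset[of ?A] lookup_add distrib_right sum.distrib)
qed

lemma Lfun_zero[simp]: "Lfun y 0 = 0"
  by (simp add: Lfun_def)

lemma Lfun_sum: "Lfun y (sum F S) = (\<Sum>s\<in>S. Lfun y (F s))"
  by (induction S rule: infinite_finite_induct) (auto simp: Lfun_add)

lemma Lfun_single[simp]: "Lfun y (Poly_Mapping.single a c) = c * y a"
  by (simp add: Lfun_def)

lemma Lfun_uminus: "Lfun y (- p) = - Lfun y p"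
  by (simp add: Lfun_def sum_negf)

lemma Lfun_diff: "Lfun y (p - q) = Lfun y p - Lfun y q"
  using Lfun_add[of y p "-q"] by (simp add: Lfun_uminus)

lemma mult_single_right:
  "(q::mpoly) * Poly_Mapping.single \<delta> c = (\<Sum>\<gamma>\<in>Poly_Mapping.keys q. Poly_Mapping.single (\<gamma> + \<delta>) (Poly_Mapping.lookup q \<gamma> * c))"
proof -
  have "q * Poly_Mapping.single \<delta> c = (\<Sum>\<gamma>\<in>Poly_Mapping.keys q. Poly_Mapping.single \<gamma> (Poly_Mapping.lookup q \<gamma>)) * Poly_Mapping.single \<delta> c"
    using poly_decomp[of q] by simp
  also have "\<dots> = (\<Sum>\<gamma>\<in>Poly_Mapping.keys q. Poly_Mapping.single (\<gamma> + \<delta>) (Poly_Mapping.lookup q \<gamma> * c))"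
    by (simp add: sum_distrib_right mult_single)
  finally show ?thesis .
qed

lemma Lfun_mult_single:
  "Lfun y ((q::mpoly) * Poly_Mapping.single \<delta> c) = c * (\<Sum>\<gamma>\<in>Poly_Mapping.keys q. Poly_Mapping.lookup q \<gamma> * y (\<gamma> + \<delta>))"
  by (simp add: mult_single_right Lfun_sum sum_distrib_left mult_ac)

lemma const_mult_eq: "const c * (p::mpoly) = (\<Sum>\<gamma>\<in>Poly_Mapping.keys p. Poly_Mapping.single \<gamma> (c * Poly_Mapping.lookup p \<gamma>))"
proof -
  have "const c * p = p * Poly_Mapping.single 0 c" by (simp add: const_def mult.commute)
  then show ?thesis by (simp add: mult_single_right mult.commute)
qed

lemma lookup_const_mult[simp]: "Poly_Mapping.lookup (const c * p) \<alpha> = c * Poly_Mapping.lookup p \<alpha>"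
  unfolding const_mult_eq lookup_sum lookup_single
  by (cases "\<alpha> \<in> Poly_Mapping.keys p") (auto simp: when_def in_keys_iff)

lemma keys_const_mult: "Poly_Mapping.keys (const c * p) \<subseteq> Poly_Mapping.keys p"
  by (auto simp: in_keys_iff)

lemma Lfun_const_mult: "Lfun y (const c * p) = c * Lfun y p"
proof -
  have "Lfun y (const c * p) = (\<Sum>\<alpha>\<in>Poly_Mapping.keys p. Poly_Mapping.lookup (const c * p) \<alpha> * y \<alpha>)"
    by (rule Lfun_superset[OF finite_keys keys_const_mult])
  then show ?thesis by (simp add: Lfun_def sum_distrib_left mult.assoc)
qed

lemma const_add: "const (a + b) = const a + const b"
  by (simp add: const_def single_add)

lemma const_mult_const: "const a * const b = const (a * b)"
  by (simp add: const_def mult_single)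

lemma const_one: "const 1 = 1"
  by (simp add: const_def one_poly_mapping.abs_eq Poly_Mapping.single.abs_eq)

lemma Lfun_const: "Lfun y (const c) = c * y 0"
  by (simp add: const_def)


lemma mdeg_superset:
  assumes "finite S" "Poly_Mapping.keys \<alpha> \<subseteq> S"
  shows "mdeg \<alpha> = (\<Sum>i\<in>S. Poly_Mapping.lookup \<alpha> i)"
  unfolding mdeg_def
  by (rule sum.mono_neutral_left) (use assms in \<open>auto simp: in_keys_iff\<close>)

lemma mdeg_add: "mdeg (\<alpha> + \<beta>) = mdeg \<alpha> + mdeg \<beta>"
proof -
  let ?S = "Poly_Mapping.keys \<alpha> \<union> Poly_Mapping.keys \<beta>"
  have "Poly_Mapping.keys (\<alpha>+\<beta>) \<subseteq> ?S" by (rule keys_add)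
  then show ?thesis
    by (simp add: mdeg_superset[of ?S] lookup_add sum.distrib)
qed

lemma mdeg_zero[simp]: "mdeg 0 = 0"
  by (simp add: mdeg_def)

lemma mdeg_single[simp]: "mdeg (Poly_Mapping.single i k) = k"
  by (simp add: mdeg_def)

lemma mdeg_eq_0: "mdeg \<alpha> = 0 \<Longrightarrow> \<alpha> = 0"
  unfolding mdeg_def
  by (metis (mono_tags, lifting) finite_keys in_keys_iff keys_eq_empty sum_eq_0_iff ex_in_conv)

lemma finite_monset: "finite (monset n d)"
proof -
  let ?S = "{f. \<forall>x. (x \<in> {..<n} \<longrightarrow> f x \<in> {0..d}) \<and> (x \<notin> {..<n} \<longrightarrow> f x = (0::nat))}"
  have fin: "finite ?S" by (rule finite_set_of_finite_funs) auto
  have "Poly_Mapping.lookup ` monset n d \<subseteq> ?S"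
  proof
    fix f assume "f \<in> Poly_Mapping.lookup ` monset n d"
    then obtain \<alpha> where a: "\<alpha> \<in> monset n d" "f = Poly_Mapping.lookup \<alpha>" by auto
    have "f x \<le> d" for x
    proof (cases "x \<in> Poly_Mapping.keys \<alpha>")
      case True
      then have "f x \<le> mdeg \<alpha>" unfolding a(2) mdeg_def
        by (intro member_le_sum) auto
      with a show ?thesis by (auto simp: monset_def)
    next
      case False then show ?thesis using a by (simp add: in_keys_iff)
    qed
    moreover have "x \<notin> {..<n} \<Longrightarrow> f x = 0" for x
      using a by (auto simp: monset_def in_keys_iff)
    ultimately show "f \<in> ?S" by auto
  qed
  then have "finite (Poly_Mapping.lookup ` monset n d)" using fin finite_subset by blast
  moreover have "inj_on Poly_Mapping.lookup (monset n d)"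
    by (auto simp: inj_on_def poly_mapping.lookup_inject)
  ultimately show ?thesis using finite_image_iff by blast
qed

lemma zero_in_monset[simp]: "0 \<in> monset n d"
  by (simp add: monset_def)

lemma monset_add: "\<alpha> \<in> monset n a \<Longrightarrow> \<beta> \<in> monset n b \<Longrightarrow> \<alpha> + \<beta> \<in> monset n (a + b)"
  using keys_add[of \<alpha> \<beta>] by (auto simp: monset_def mdeg_add)

lemma monset_mono: "a \<le> b \<Longrightarrow> monset n a \<subseteq> monset n b"
  by (auto simp: monset_def)

lemma monset_split_aux:
  "\<forall>\<gamma>. mdeg \<gamma> = d \<longrightarrow> \<gamma> \<in> monset n (a + b) \<longrightarrow> (\<exists>\<alpha>\<in>monset n a. \<exists>\<beta>\<in>monset n b. \<gamma> = \<alpha> + \<beta>)"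
proof (induction d)
  case 0
  then show ?case
    by (auto dest!: mdeg_eq_0 intro!: bexI[of _ 0])
next
  case (Suc d)
  show ?case
  proof (intro allI impI)
    fix \<gamma> :: monom assume dg: "mdeg \<gamma> = Suc d" and g: "\<gamma> \<in> monset n (a + b)"
    then have "\<gamma> \<noteq> 0" by auto
    then obtain i where i: "i \<in> Poly_Mapping.keys \<gamma>" by (metis ex_in_conv keys_eq_empty)
    define \<gamma>' where "\<gamma>' = \<gamma> - Poly_Mapping.single i 1"
    have lk: "Poly_Mapping.lookup \<gamma> i \<ge> 1" using i by (simp add: in_keys_iff)
    have ge: "\<gamma> = \<gamma>' + Poly_Mapping.single i 1"
      by (rule poly_mapping_eqI) (use lk in \<open>auto simp: \<gamma>'_def lookup_add lookup_minus lookup_single when_def\<close>)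
    have d': "mdeg \<gamma>' = d" using dg ge mdeg_add[of \<gamma>' "Poly_Mapping.single i 1"] by simp
    have "Poly_Mapping.keys \<gamma>' \<subseteq> Poly_Mapping.keys \<gamma>"
      by (auto simp: \<gamma>'_def in_keys_iff lookup_minus)
    then have "\<gamma>' \<in> monset n (a + b)" using g d' dg by (auto simp: monset_def)
    with Suc.IH d' obtain \<alpha> \<beta> where ab: "\<alpha>\<in>monset n a" "\<beta>\<in>monset n b" "\<gamma>' = \<alpha> + \<beta>" by blast
    have iv: "i < n" using i g by (auto simp: monset_def)
    have si: "Poly_Mapping.single i 1 \<in> monset n 1" using iv by (auto simp: monset_def)
    have "Suc d \<le> a + b" using g dg by (auto simp: monset_def)
    then have "mdeg \<alpha> < a \<or> mdeg \<beta> < b" using ab d' mdeg_add[of \<alpha> \<beta>] by auto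
    then show "\<exists>\<alpha>\<in>monset n a. \<exists>\<beta>\<in>monset n b. \<gamma> = \<alpha> + \<beta>"
    proof
      assume "mdeg \<alpha> < a"
      then have "\<alpha> + Poly_Mapping.single i 1 \<in> monset n a"
        using monset_add[OF _ si, of \<alpha> "mdeg \<alpha>"] ab(1) monset_mono[of "mdeg \<alpha> + 1" a n]
        by (auto simp: monset_def)
      then show ?thesis using ab ge by (metis add.assoc add.commute)
    next
      assume "mdeg \<beta> < b"
      then have "\<beta> + Poly_Mapping.single i 1 \<in> monset n b"
        using monset_add[OF _ si, of \<beta> "mdeg \<beta>"] ab(2) monset_mono[of "mdeg \<beta> + 1" b n]
        by (auto simp: monset_def)
      then show ?thesis using ab ge by (metis add.assoc)
    qed
  qed
qed

lemma monset_split: "\<gamma> \<in> monset n (a + b) \<Longrightarrow> \<exists>\<alpha>\<in>monset n a. \<exists>\<beta>\<in>monset n b. \<gamma> = \<alpha> + \<beta>"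
  using monset_split_aux by blast


definition rhs :: "nat \<Rightarrow> (nat \<Rightarrow> mpoly) \<Rightarrow> nat \<Rightarrow> (nat \<Rightarrow> mpoly) \<Rightarrow> nat \<Rightarrow> nat
   \<Rightarrow> (nat \<Rightarrow> monom \<Rightarrow> monom \<Rightarrow> real) \<Rightarrow> (nat \<Rightarrow> monom \<Rightarrow> real) \<Rightarrow> mpoly" where
  "rhs n g m h l k G u = gram n k (G 0)
       + (\<Sum>i<m. g i * gram n (k - hdeg (g i)) (G (Suc i)))
       + (\<Sum>j<l. h j * lin n (2 * (k - hdeg (h j))) (u j))"

lemma sos_cert_rhs: "sos_cert n f g m h l k \<xi> G u \<longleftrightarrow> f - const \<xi> = rhs n g m h l k G u"
  by (simp add: sos_cert_def rhs_def)

lemma Lfun_mult_gram: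
  "Lfun y (q * gram n d G) = (\<Sum>\<alpha>\<in>monset n d. \<Sum>\<beta>\<in>monset n d. G \<alpha> \<beta> * locm q y \<alpha> \<beta>)"
  by (simp add: gram_def sum_distrib_left Lfun_sum Lfun_mult_single locm_def add.commute)

lemma Lfun_gram:
  "Lfun y (gram n d G) = (\<Sum>\<alpha>\<in>monset n d. \<Sum>\<beta>\<in>monset n d. G \<alpha> \<beta> * y (\<alpha> + \<beta>))"
  by (simp add: gram_def Lfun_sum)

lemma Lfun_mult_lin:
  "Lfun y (q * lin n d u) = (\<Sum>\<alpha>\<in>monset n d. u \<alpha> * (\<Sum>\<gamma>\<in>Poly_Mapping.keys q. Poly_Mapping.lookup q \<gamma> * y (\<gamma> + \<alpha>)))"
  by (simp add: lin_def sum_distrib_left Lfun_sum Lfun_mult_single)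

lemma const_mult_single: "const c * Poly_Mapping.single a v = Poly_Mapping.single a (c * v)"
  by (simp add: const_def mult_single)

lemma gram_add: "gram n d (\<lambda>a b. G a b + G' a b) = gram n d G + gram n d G'"
  by (simp add: gram_def single_add sum.distrib)

lemma gram_scale: "gram n d (\<lambda>a b. c * G a b) = const c * gram n d G"
  by (simp add: gram_def sum_distrib_left const_mult_single)

lemma lin_add: "lin n d (\<lambda>a. u a + u' a) = lin n d u + lin n d u'"
  by (simp add: lin_def single_add sum.distrib)

lemma lin_scale: "lin n d (\<lambda>a. c * u a) = const c * lin n d u"
  by (simp add: lin_def sum_distrib_left const_mult_single)

lemma pdeg_le_iff: "pdeg p \<le> D \<longleftrightarrow> (\<forall>\<alpha>\<in>Poly_Mapping.keys p. mdeg \<alpha> \<le> D)"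
  by (simp add: pdeg_def)

lemma keys_monset: "in_vars n p \<Longrightarrow> pdeg p \<le> D \<Longrightarrow> Poly_Mapping.keys p \<subseteq> monset n D"
  by (auto simp: in_vars_def pdeg_le_iff monset_def)

lemma pdeg_hdeg: "pdeg p \<le> 2 * hdeg p"
  by (simp add: hdeg_def)

lemma keys_mult_monset:
  assumes "Poly_Mapping.keys p \<subseteq> monset n a" "Poly_Mapping.keys q \<subseteq> monset n b"
  shows "Poly_Mapping.keys (p * q) \<subseteq> monset n (a + b)"
  using keys_mult[of p q] assms monset_add by blast

lemma keys_sum_sub: "(\<And>s. s \<in> S \<Longrightarrow> Poly_Mapping.keys (F s) \<subseteq> A) \<Longrightarrow> Poly_Mapping.keys (sum F S) \<subseteq> A"
  using keys_sum[of F S] by blast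

lemma keys_add_sub: "Poly_Mapping.keys p \<subseteq> A \<Longrightarrow> Poly_Mapping.keys q \<subseteq> A \<Longrightarrow> Poly_Mapping.keys (p + q) \<subseteq> A"
  using keys_add[of p q] by blast

lemma keys_diff_sub: "Poly_Mapping.keys (p::mpoly) \<subseteq> A \<Longrightarrow> Poly_Mapping.keys q \<subseteq> A \<Longrightarrow> Poly_Mapping.keys (p - q) \<subseteq> A"
  using keys_add_sub[of p A "-q"] by simp

lemma keys_gram: "Poly_Mapping.keys (gram n d G) \<subseteq> monset n (2 * d)"
  unfolding gram_def
  by (intro keys_sum_sub) (auto dest: monset_add simp: mult_2)

lemma keys_lin: "Poly_Mapping.keys (lin n d u) \<subseteq> monset n d"
  unfolding lin_def by (intro keys_sum_sub) auto

lemma keys_const: "Poly_Mapping.keys (const c) \<subseteq> monset n d"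
  by (simp add: const_def)

lemma keys_xmon: "\<alpha> \<in> monset n d \<Longrightarrow> Poly_Mapping.keys (xmon \<alpha>) \<subseteq> monset n d"
  by (simp add: xmon_def)

lemma keys_loc_gram:
  assumes "in_vars n q" "hdeg q \<le> k"
  shows "Poly_Mapping.keys (q * gram n (k - hdeg q) G) \<subseteq> monset n (2 * k)"
proof -
  have "Poly_Mapping.keys q \<subseteq> monset n (2 * hdeg q)"
    by (rule keys_monset[OF assms(1) pdeg_hdeg])
  from keys_mult_monset[OF this keys_gram[of n "k - hdeg q" G]]
  have "Poly_Mapping.keys (q * gram n (k - hdeg q) G) \<subseteq> monset n (2 * hdeg q + 2 * (k - hdeg q))" .
  moreover have "2 * hdeg q + 2 * (k - hdeg q) = 2 * k" using assms(2) by simp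
  ultimately show ?thesis by simp
qed

lemma keys_loc_lin:
  assumes "in_vars n q" "hdeg q \<le> k"
  shows "Poly_Mapping.keys (q * lin n (2 * (k - hdeg q)) u) \<subseteq> monset n (2 * k)"
proof -
  have "Poly_Mapping.keys q \<subseteq> monset n (2 * hdeg q)"
    by (rule keys_monset[OF assms(1) pdeg_hdeg])
  from keys_mult_monset[OF this keys_lin[of n "2 * (k - hdeg q)" u]]
  have "Poly_Mapping.keys (q * lin n (2 * (k - hdeg q)) u) \<subseteq> monset n (2 * hdeg q + 2 * (k - hdeg q))" .
  moreover have "2 * hdeg q + 2 * (k - hdeg q) = 2 * k" using assms(2) by simp
  ultimately show ?thesis by simp
qed

lemma keys_rhs:
  assumes "\<forall>i<m. in_vars n (g i) \<and> hdeg (g i) \<le> k" "\<forall>j<l. in_vars n (h j) \<and> hdeg (h j) \<le> k"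
  shows "Poly_Mapping.keys (rhs n g m h l k G u) \<subseteq> monset n (2 * k)"
  unfolding rhs_def
  using assms
  by (intro keys_add_sub keys_sum_sub keys_gram keys_loc_gram keys_loc_lin) auto


definition qf :: "monom set \<Rightarrow> (monom \<Rightarrow> monom \<Rightarrow> real) \<Rightarrow> (monom \<Rightarrow> real) \<Rightarrow> real" where
  "qf S A c = (\<Sum>\<alpha>\<in>S. \<Sum>\<beta>\<in>S. c \<alpha> * A \<alpha> \<beta> * c \<beta>)"

lemma psd_on_qf: "psd_on S A \<longleftrightarrow> symm_on S A \<and> (\<forall>c. qf S A c \<ge> 0)"
  by (simp add: psd_on_def qf_def)

lemma sum_ind_left: "s \<in> S \<Longrightarrow> finite S \<Longrightarrow> (\<Sum>a\<in>S. (if a = s then x else 0) * F a) = x * (F s :: real)"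
proof -
  assume a: "s \<in> S" "finite S"
  have "(\<Sum>a\<in>S. (if a = s then x else 0) * F a) = (\<Sum>a\<in>S. if a = s then x * F a else 0)"
    by (rule sum.cong) auto
  then show ?thesis using a by simp
qed

lemma sum_ind_right: "s \<in> S \<Longrightarrow> finite S \<Longrightarrow> (\<Sum>a\<in>S. F a * (if a = s then x else 0)) = F s * (x :: real)"
  using sum_ind_left[of s S x F] by (simp add: mult.commute)

lemma qf_shift:
  assumes "finite S" "s \<in> S" "symm_on S A"
  shows "qf S A (\<lambda>a. c a + (if a = s then x else 0)) = qf S A c + 2 * x * (\<Sum>b\<in>S. A s b * c b) + x^2 * A s s"
proof -
  have e: "(c a + (if a = s then x else 0)) * A a b * (c b + (if b = s then x else 0)) =
     c a * A a b * c b + (if a = s then x else 0) * (A a b * c b) + (if b = s then x else 0) * (c a * A a b)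
     + (if b = s then x else 0) * ((if a = s then x else 0) * A a b)" for a b
    by (simp add: algebra_simps)
  have s1: "(\<Sum>a\<in>S. \<Sum>b\<in>S. (if a = s then x else 0) * (A a b * c b)) = x * (\<Sum>b\<in>S. A s b * c b)"
  proof -
    have "(\<Sum>a\<in>S. \<Sum>b\<in>S. (if a = s then x else 0) * (A a b * c b)) = (\<Sum>a\<in>S. (if a = s then x else 0) * (\<Sum>b\<in>S. A a b * c b))"
      by (simp add: sum_distrib_left)
    then show ?thesis using assms by (simp add: sum_ind_left)
  qed
  have s2: "(\<Sum>a\<in>S. \<Sum>b\<in>S. (if b = s then x else 0) * (c a * A a b)) = x * (\<Sum>b\<in>S. A s b * c b)"
  proof -
    have "(\<Sum>a\<in>S. \<Sum>b\<in>S. (if b = s then x else 0) * (c a * A a b)) = (\<Sum>a\<in>S. x * (c a * A a s))"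
      using assms by (simp add: sum_ind_left)
    also have "\<dots> = x * (\<Sum>b\<in>S. A s b * c b)"
      using assms(3) assms(2) by (auto simp: sum_distrib_left symm_on_def mult.commute intro!: sum.cong)
    finally show ?thesis .
  qed
  have s3: "(\<Sum>a\<in>S. \<Sum>b\<in>S. (if b = s then x else 0) * ((if a = s then x else 0) * A a b)) = x^2 * A s s"
  proof -
    have "(\<Sum>a\<in>S. \<Sum>b\<in>S. (if b = s then x else 0) * ((if a = s then x else 0) * A a b)) = (\<Sum>a\<in>S. x * ((if a = s then x else 0) * A a s))"
      using assms by (simp add: sum_ind_left)
    also have "\<dots> = x * (\<Sum>a\<in>S. (if a = s then x else 0) * A a s)" by (simp add: sum_distrib_left)
    also have "\<dots> = x^2 * A s s" using assms by (simp add: sum_ind_left power2_eq_square)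
    finally show ?thesis .
  qed
  show ?thesis
    unfolding qf_def e sum.distrib s1 s2 s3 by simp
qed

lemma qf_ind: "finite S \<Longrightarrow> b \<in> S \<Longrightarrow> qf S A (\<lambda>a. if a = b then 1 else 0) = A b b"
proof -
  assume a: "finite S" "b \<in> S"
  have "qf S A (\<lambda>a. if a = b then 1 else 0) = (\<Sum>a\<in>S. (if a = b then 1 else 0) * (\<Sum>b'\<in>S. A a b' * (if b' = b then 1 else 0)))"
    by (simp add: qf_def sum_distrib_left mult.assoc)
  also have "\<dots> = A b b" using a by (simp add: sum_ind_left sum_ind_right)
  finally show ?thesis .
qed

lemma psd_diag_nonneg: "psd_on S A \<Longrightarrow> finite S \<Longrightarrow> s \<in> S \<Longrightarrow> A s s \<ge> 0"
  using qf_ind[of S s A] by (metis psd_on_qf)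

lemma psd_row_zero:
  assumes "psd_on S A" "finite S" "s \<in> S" "A s s = 0" "b \<in> S"
  shows "A s b = 0"
proof (rule ccontr)
  assume nz: "A s b \<noteq> 0"
  have sy: "symm_on S A" using assms by (simp add: psd_on_qf)
  define c where "c = (\<lambda>a. if a = b then 1 else (0::real))"
  have "(\<Sum>b'\<in>S. A s b' * c b') = A s b" unfolding c_def using assms(2,5) by (simp add: sum_ind_right)
  then have "qf S A (\<lambda>a. c a + (if a = s then x else 0)) = qf S A c + 2 * x * A s b" for x
    using qf_shift[OF assms(2,3) sy, of c x] assms(4,5) by simp
  moreover have "qf S A c = A b b" using assms(2,5) unfolding c_def by (rule qf_ind)
  ultimately have "\<And>x. A b b + 2 * x * A s b \<ge> 0" using assms(1) by (metis psd_on_qf)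
  from this[of "- (A b b + 1) / (2 * A s b)"] nz show False by (simp add: field_simps)
qed

lemma psd_restrict:
  assumes "psd_on (insert s F) A" "finite F"
  shows "psd_on F A"
proof -
  have "qf F A c \<ge> 0" for c
  proof (cases "s \<in> F")
    case True then show ?thesis using assms by (simp add: psd_on_qf insert_absorb)
  next
    case False
    define c0 where "c0 = c(s := 0)"
    have "qf (insert s F) A c0 \<ge> 0" using assms by (simp add: psd_on_qf)
    moreover have "qf (insert s F) A c0 = qf F A c0"
      using assms False by (simp add: qf_def c0_def)
    moreover have "qf F A c0 = qf F A c"
      using False by (auto simp: qf_def c0_def intro!: sum.cong)
    ultimately show ?thesis by simp
  qed
  moreover have "symm_on F A" using assms by (auto simp: psd_on_qf symm_on_def)
  ultimately show ?thesis by (simp add: psd_on_qf)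
qed

lemma psd_schur:
  assumes "psd_on S A" "finite S" "s \<in> S" "A s s > 0"
  shows "psd_on S (\<lambda>a b. A a b - A a s * A s b / A s s)"
proof -
  have sy: "symm_on S A" using assms by (simp add: psd_on_qf)
  have "qf S (\<lambda>a b. A a b - A a s * A s b / A s s) c \<ge> 0" for c
  proof -
    define v where "v = (\<Sum>b\<in>S. A s b * c b)"
    have v2: "(\<Sum>a\<in>S. c a * A a s) = v"
      unfolding v_def using sy assms(3) by (auto simp: symm_on_def mult.commute intro!: sum.cong)
    have "qf S (\<lambda>a b. A a b - A a s * A s b / A s s) c = qf S A c - (\<Sum>a\<in>S. \<Sum>b\<in>S. (c a * A a s) * (A s b * c b)) / A s s"
      by (simp add: qf_def algebra_simps sum_subtractf sum_divide_distrib)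
    also have "(\<Sum>a\<in>S. \<Sum>b\<in>S. (c a * A a s) * (A s b * c b)) = (\<Sum>a\<in>S. c a * A a s) * (\<Sum>b\<in>S. A s b * c b)"
      by (simp add: sum_product)
    also have "\<dots> = v * v" using v2 v_def by simp
    also have "qf S A c - v * v / A s s = qf S A (\<lambda>a. c a + (if a = s then - v / A s s else 0))"
    proof -
      have "qf S A (\<lambda>a. c a + (if a = s then - v / A s s else 0)) = qf S A c + 2 * (- v / A s s) * v + (- v / A s s)^2 * A s s"
        using qf_shift[OF assms(2,3) sy, of c "- v / A s s"] unfolding v_def by simp
      then show ?thesis using assms(4) by (simp add: power2_eq_square field_simps)
    qed
    also have "\<dots> \<ge> 0" using assms(1) by (simp add: psd_on_qf)
    finally show ?thesis .
  qed
  moreover have "symm_on S (\<lambda>a b. A a b - A a s * A s b / A s s)"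
    using sy assms(3) by (auto simp: symm_on_def)
  ultimately show ?thesis by (simp add: psd_on_qf)
qed

lemma psd_trace_aux:
  "finite S \<Longrightarrow> \<forall>A B. psd_on S A \<longrightarrow> psd_on S B \<longrightarrow> (\<Sum>a\<in>S. \<Sum>b\<in>S. A a b * B a b) \<ge> 0"
proof (induction S rule: finite_induct)
  case empty then show ?case by simp
next
  case (insert s F)
  show ?case
  proof (intro allI impI)
    fix A B assume A: "psd_on (insert s F) A" and B: "psd_on (insert s F) B"
    let ?S = "insert s F"
    have fin: "finite ?S" using insert by simp
    have syA: "symm_on ?S A" and syB: "symm_on ?S B" using A B by (simp_all add: psd_on_qf)
    have red: "(\<Sum>a\<in>?S. \<Sum>b\<in>?S. A' a b * B a b) \<ge> 0"
      if A': "psd_on ?S A'" and z: "\<forall>b\<in>?S. A' s b = 0" for A'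
    proof -
      have z2: "\<forall>a\<in>?S. A' a s = 0" using z A' by (auto simp: psd_on_qf symm_on_def)
      have "(\<Sum>a\<in>?S. \<Sum>b\<in>?S. A' a b * B a b) = (\<Sum>a\<in>F. \<Sum>b\<in>F. A' a b * B a b)"
        using insert(1,2) z z2 by (simp add: sum.insert)
      also have "\<dots> \<ge> 0"
        using insert.IH psd_restrict[OF A' insert(1)] psd_restrict[OF B insert(1)] by blast
      finally show ?thesis .
    qed
    have "A s s \<ge> 0" using psd_diag_nonneg[OF A fin] by simp
    then show "(\<Sum>a\<in>?S. \<Sum>b\<in>?S. A a b * B a b) \<ge> 0"
    proof (cases "A s s = 0")
      case True
      then show ?thesis using red[OF A] psd_row_zero[OF A fin _ True] by simp
    next
      case False
      with \<open>A s s \<ge> 0\<close> have pos: "A s s > 0" by simp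
      define A' where "A' = (\<lambda>a b. A a b - A a s * A s b / A s s)"
      have A'p: "psd_on ?S A'" unfolding A'_def by (rule psd_schur[OF A fin _ pos]) simp
      have "\<forall>b\<in>?S. A' s b = 0" using pos by (simp add: A'_def)
      then have r: "(\<Sum>a\<in>?S. \<Sum>b\<in>?S. A' a b * B a b) \<ge> 0" by (rule red[OF A'p])
      have q: "(\<Sum>a\<in>?S. \<Sum>b\<in>?S. (A a s) * B a b * (A s b)) \<ge> 0"
      proof -
        have "(\<Sum>a\<in>?S. \<Sum>b\<in>?S. (A a s) * B a b * (A s b)) = qf ?S B (\<lambda>a. A s a)"
          using syA by (auto simp: qf_def symm_on_def intro!: sum.cong)
        then show ?thesis using B by (simp add: psd_on_qf)
      qed
      have "(\<Sum>a\<in>?S. \<Sum>b\<in>?S. A a b * B a b) = (\<Sum>a\<in>?S. \<Sum>b\<in>?S. A' a b * B a b + (A a s) * B a b * (A s b) / A s s)"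
        using pos by (intro sum.cong refl) (simp add: A'_def field_simps)
      also have "\<dots> = (\<Sum>a\<in>?S. \<Sum>b\<in>?S. A' a b * B a b)
            + (\<Sum>a\<in>?S. \<Sum>b\<in>?S. (A a s) * B a b * (A s b)) / A s s"
        by (simp add: sum.distrib sum_divide_distrib)
      finally have "(\<Sum>a\<in>?S. \<Sum>b\<in>?S. A a b * B a b) = (\<Sum>a\<in>?S. \<Sum>b\<in>?S. A' a b * B a b)
            + (\<Sum>a\<in>?S. \<Sum>b\<in>?S. (A a s) * B a b * (A s b)) / A s s" .
      then show ?thesis using r q pos by simp
    qed
  qed
qed

lemma psd_trace:
  "finite S \<Longrightarrow> psd_on S A \<Longrightarrow> psd_on S B \<Longrightarrow> (\<Sum>a\<in>S. \<Sum>b\<in>S. A a b * B a b) \<ge> 0"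
  using psd_trace_aux by blast

lemma psd_rank1: "psd_on S (\<lambda>a b. c a * c b)"
proof -
  have "qf S (\<lambda>a b. c a * c b) d = (\<Sum>a\<in>S. d a * c a)^2" for d
    by (simp add: qf_def power2_eq_square sum_product mult_ac)
  then show ?thesis by (simp add: psd_on_qf symm_on_def mult.commute)
qed

lemma pd_imp_psd: "pd_on S A \<Longrightarrow> psd_on S A"
  unfolding pd_on_def psd_on_def
  by (metis (no_types, lifting) less_eq_real_def mult_eq_0_iff sum.neutral)

lemma psd_add: "psd_on S A \<Longrightarrow> psd_on S B \<Longrightarrow> psd_on S (\<lambda>a b. A a b + B a b)"
  by (simp add: psd_on_def symm_on_def algebra_simps sum.distrib add_nonneg_nonneg)

lemma psd_scale: "psd_on S A \<Longrightarrow> c \<ge> 0 \<Longrightarrow> psd_on S (\<lambda>a b. c * A a b)"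
proof -
  assume a: "psd_on S A" "c \<ge> 0"
  have "qf S (\<lambda>a b. c * A a b) d = c * qf S A d" for d
    by (simp add: qf_def sum_distrib_left mult_ac)
  then show ?thesis using a by (simp add: psd_on_qf symm_on_def)
qed


lemma pd_perturb:
  assumes "finite S" "symm_on S A" "\<forall>a\<in>S. \<theta> a \<ge> t" "t > 0"
  shows "\<exists>T. \<forall>s\<ge>T. pd_on S (\<lambda>a b. A a b + (if a = b then s * \<theta> a else 0))"
proof -
  define M where "M = (\<Sum>a\<in>S. \<Sum>b\<in>S. \<bar>A a b\<bar>)"
  define N where "N = real (card S)"
  have M0: "M \<ge> 0" unfolding M_def by (simp add: sum_nonneg)
  have N0: "N \<ge> 0" unfolding N_def by simp
  have AM: "\<bar>A a b\<bar> \<le> M" if "a \<in> S" "b \<in> S" for a b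
  proof -
    have "\<bar>A a b\<bar> \<le> (\<Sum>b\<in>S. \<bar>A a b\<bar>)" using assms(1) that by (intro member_le_sum) auto
    also have "\<dots> \<le> M" unfolding M_def using assms(1) that
      by (intro member_le_sum[where f = "\<lambda>a. \<Sum>b\<in>S. \<bar>A a b\<bar>"]) (auto simp: sum_nonneg)
    finally show ?thesis .
  qed
  show ?thesis
  proof (intro exI allI impI)
    fix s assume sT: "(M * N + 1) / t \<le> s"
    then have st: "s * t \<ge> M * N + 1" using assms(4) by (simp add: field_simps)
    have "(M * N + 1) / t > 0" using M0 N0 assms(4) by (simp add: add_nonneg_pos)
    then have s0: "s \<ge> 0" using sT by linarith
    let ?B = "\<lambda>a b. A a b + (if a = b then s * \<theta> a else 0)"
    have "(\<Sum>a\<in>S. \<Sum>b\<in>S. c a * ?B a b * c b) > 0" if ex: "\<exists>a\<in>S. c a \<noteq> 0" for c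
    proof -
      define C where "C = (\<Sum>a\<in>S. (c a)^2)"
      have Cpos: "C > 0" unfolding C_def using ex assms(1)
        by (metis (mono_tags, lifting) power2_less_eq_zero_iff sum_pos2 zero_le_power2 not_le)
      have h1: "c a * A a b * c b \<ge> - (M * (((c a)^2 + (c b)^2) / 2))" if "a \<in> S" "b \<in> S" for a b
      proof -
        have "\<bar>c a * A a b * c b\<bar> = \<bar>A a b\<bar> * (\<bar>c a\<bar> * \<bar>c b\<bar>)" by (simp add: abs_mult)
        also have "\<dots> \<le> M * (((c a)^2 + (c b)^2) / 2)"
        proof (rule mult_mono)
          show "\<bar>c a\<bar> * \<bar>c b\<bar> \<le> ((c a)^2 + (c b)^2) / 2"
          proof -
            have "0 \<le> (\<bar>c a\<bar> - \<bar>c b\<bar>)^2" by simp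
            then show ?thesis by (simp add: power2_diff power2_abs)
          qed
        qed (use AM that M0 in auto)
        finally show ?thesis by linarith
      qed
      have h2: "(\<Sum>a\<in>S. \<Sum>b\<in>S. M * (((c a)^2 + (c b)^2) / 2)) = M * N * C"
      proof -
        have i1: "(\<Sum>b\<in>S. M * (((c a)^2 + (c b)^2) / 2)) = M / 2 * (N * (c a)^2 + C)" for a
        proof -
          have "(\<Sum>b\<in>S. M * (((c a)^2 + (c b)^2) / 2)) = (\<Sum>b\<in>S. M / 2 * ((c a)^2 + (c b)^2))"
            by (intro sum.cong refl) simp
          also have "\<dots> = M / 2 * (\<Sum>b\<in>S. ((c a)^2 + (c b)^2))" by (simp only: sum_distrib_left)
          also have "(\<Sum>b\<in>S. ((c a)^2 + (c b)^2)) = N * (c a)^2 + C" by (simp add: sum.distrib C_def N_def)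
          finally show ?thesis .
        qed
        have "(\<Sum>a\<in>S. \<Sum>b\<in>S. M * (((c a)^2 + (c b)^2) / 2)) = (\<Sum>a\<in>S. M / 2 * (N * (c a)^2 + C))"
          by (rule sum.cong[OF refl]) (rule i1)
        also have "\<dots> = M / 2 * (\<Sum>a\<in>S. (N * (c a)^2 + C))" by (simp only: sum_distrib_left)
        also have "(\<Sum>a\<in>S. (N * (c a)^2 + C)) = N * C + N * C"
          by (simp add: sum.distrib C_def N_def sum_distrib_left)
        finally show ?thesis by simp
      qed
      have "(\<Sum>a\<in>S. \<Sum>b\<in>S. c a * A a b * c b) \<ge> (\<Sum>a\<in>S. \<Sum>b\<in>S. - (M * (((c a)^2 + (c b)^2) / 2)))"
        using h1 by (intro sum_mono) auto
      then have hA: "(\<Sum>a\<in>S. \<Sum>b\<in>S. c a * A a b * c b) \<ge> - (M * N * C)"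
        using h2 by (simp add: sum_negf)
      have hD: "(\<Sum>a\<in>S. \<Sum>b\<in>S. c a * (if a = b then s * \<theta> a else 0) * c b) = (\<Sum>a\<in>S. s * \<theta> a * (c a)^2)"
      proof -
        have "(\<Sum>a\<in>S. \<Sum>b\<in>S. c a * (if a = b then s * \<theta> a else 0) * c b) = (\<Sum>a\<in>S. \<Sum>b\<in>S. if b = a then c a * (s * \<theta> a) * c b else 0)"
          by (intro sum.cong refl) auto
        also have "\<dots> = (\<Sum>a\<in>S. s * \<theta> a * (c a)^2)" using assms(1)
          by (simp add: power2_eq_square mult_ac)
        finally show ?thesis .
      qed
      have "(\<Sum>a\<in>S. s * \<theta> a * (c a)^2) \<ge> (\<Sum>a\<in>S. s * t * (c a)^2)"
        using assms(3) s0 by (intro sum_mono mult_right_mono mult_left_mono) auto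
      then have hD2: "(\<Sum>a\<in>S. s * \<theta> a * (c a)^2) \<ge> s * t * C" by (simp add: C_def sum_distrib_left)
      have "(\<Sum>a\<in>S. \<Sum>b\<in>S. c a * ?B a b * c b) = (\<Sum>a\<in>S. \<Sum>b\<in>S. c a * A a b * c b) + (\<Sum>a\<in>S. \<Sum>b\<in>S. c a * (if a = b then s * \<theta> a else 0) * c b)"
        by (simp add: algebra_simps sum.distrib)
      also have "\<dots> \<ge> - (M * N * C) + s * t * C" using hA hD hD2 by linarith
      finally have "(\<Sum>a\<in>S. \<Sum>b\<in>S. c a * ?B a b * c b) \<ge> (s * t - M * N) * C" by (simp add: algebra_simps)
      moreover have "(s * t - M * N) * C \<ge> 1 * C" using st Cpos by (intro mult_right_mono) auto
      ultimately show ?thesis using Cpos by linarith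
    qed
    moreover have "symm_on S ?B" using assms(2) by (auto simp: symm_on_def)
    ultimately show "pd_on S ?B" by (simp add: pd_on_def)
  qed
qed


lemma gram_zero: "gram n d (\<lambda>a b. 0) = 0"
  by (simp add: gram_def)

lemma gram_sum: "gram n d (\<lambda>a b. \<Sum>\<gamma>\<in>S. F \<gamma> a b) = (\<Sum>\<gamma>\<in>S. gram n d (F \<gamma>))"
proof (induction S rule: infinite_finite_induct)
  case (infinite A) then show ?case by (simp add: gram_zero)
next
  case empty then show ?case by (simp add: gram_zero)
next
  case (insert x X)
  then show ?case using gram_add[of n d "F x" "\<lambda>a b. \<Sum>\<gamma>\<in>X. F \<gamma> a b"] by simp
qed

lemma gram_E:
  assumes "\<alpha>0 \<in> monset n d" "\<beta>0 \<in> monset n d"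
  shows "gram n d (\<lambda>a b. c * (if a = \<alpha>0 \<and> b = \<beta>0 then 1 else 0)) = Poly_Mapping.single (\<alpha>0 + \<beta>0) c"
proof -
  have "\<And>a b. Poly_Mapping.single (a + b) (c * (if a = \<alpha>0 \<and> b = \<beta>0 then 1 else 0)) =
     (if b = \<beta>0 then (if a = \<alpha>0 then Poly_Mapping.single (\<alpha>0 + \<beta>0) c else 0) else 0)"
    by auto
  then show ?thesis using assms finite_monset by (simp add: gram_def)
qed

lemma gram_repr:
  assumes "Poly_Mapping.keys p \<subseteq> monset n (2 * d)"
  shows "\<exists>A. symm_on (monset n d) A \<and> gram n d A = p"
proof -
  have "\<forall>\<gamma>\<in>Poly_Mapping.keys p. \<exists>ab. fst ab \<in> monset n d \<and> snd ab \<in> monset n d \<and> \<gamma> = fst ab + snd ab"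
  proof
    fix \<gamma> assume "\<gamma> \<in> Poly_Mapping.keys p"
    then have "\<gamma> \<in> monset n (d + d)" using assms by (auto simp: mult_2)
    from monset_split[OF this] show "\<exists>ab. fst ab \<in> monset n d \<and> snd ab \<in> monset n d \<and> \<gamma> = fst ab + snd ab" by auto
  qed
  then obtain sp where sp: "\<And>\<gamma>. \<gamma> \<in> Poly_Mapping.keys p \<Longrightarrow> fst (sp \<gamma>) \<in> monset n d \<and> snd (sp \<gamma>) \<in> monset n d \<and> \<gamma> = fst (sp \<gamma>) + snd (sp \<gamma>)"
    by metis
  define F where "F = (\<lambda>\<gamma> a b. Poly_Mapping.lookup p \<gamma> / 2 * (if a = fst (sp \<gamma>) \<and> b = snd (sp \<gamma>) then 1 else 0)
      + Poly_Mapping.lookup p \<gamma> / 2 * (if a = snd (sp \<gamma>) \<and> b = fst (sp \<gamma>) then 1 else 0))"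
  define A where "A = (\<lambda>a b. \<Sum>\<gamma>\<in>Poly_Mapping.keys p. F \<gamma> a b)"
  have Fs: "F \<gamma> a b = F \<gamma> b a" for \<gamma> a b unfolding F_def by (simp add: conj_commute add.commute)
  have "symm_on (monset n d) A" unfolding A_def symm_on_def using Fs by simp
  moreover have "gram n d A = p"
  proof -
    have "gram n d A = (\<Sum>\<gamma>\<in>Poly_Mapping.keys p. gram n d (F \<gamma>))" unfolding A_def by (rule gram_sum)
    also have "\<dots> = (\<Sum>\<gamma>\<in>Poly_Mapping.keys p. Poly_Mapping.single \<gamma> (Poly_Mapping.lookup p \<gamma>))"
    proof (rule sum.cong[OF refl])
      fix \<gamma> assume g: "\<gamma> \<in> Poly_Mapping.keys p"
      have "gram n d (F \<gamma>) = Poly_Mapping.single (fst (sp \<gamma>) + snd (sp \<gamma>)) (Poly_Mapping.lookup p \<gamma> / 2)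
          + Poly_Mapping.single (snd (sp \<gamma>) + fst (sp \<gamma>)) (Poly_Mapping.lookup p \<gamma> / 2)"
      proof -
        have e1: "gram n d (\<lambda>a b. Poly_Mapping.lookup p \<gamma> / 2 * (if a = fst (sp \<gamma>) \<and> b = snd (sp \<gamma>) then 1 else 0))
            = Poly_Mapping.single (fst (sp \<gamma>) + snd (sp \<gamma>)) (Poly_Mapping.lookup p \<gamma> / 2)"
          by (rule gram_E) (use sp[OF g] in auto)
        have e2: "gram n d (\<lambda>a b. Poly_Mapping.lookup p \<gamma> / 2 * (if a = snd (sp \<gamma>) \<and> b = fst (sp \<gamma>) then 1 else 0))
            = Poly_Mapping.single (snd (sp \<gamma>) + fst (sp \<gamma>)) (Poly_Mapping.lookup p \<gamma> / 2)"
          by (rule gram_E) (use sp[OF g] in auto)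
        show ?thesis unfolding F_def gram_add e1 e2 ..
      qed
      also have "\<dots> = Poly_Mapping.single \<gamma> (Poly_Mapping.lookup p \<gamma>)"
        using sp[OF g] by (simp add: add.commute single_add[symmetric])
      finally show "gram n d (F \<gamma>) = Poly_Mapping.single \<gamma> (Poly_Mapping.lookup p \<gamma>)" .
    qed
    also have "\<dots> = p" by (rule poly_decomp[symmetric])
    finally show ?thesis .
  qed
  ultimately show ?thesis by blast
qed


definition diag :: "(monom \<Rightarrow> real) \<Rightarrow> monom \<Rightarrow> monom \<Rightarrow> real" where
  "diag c = (\<lambda>a b. if a = b then c a else 0)"

lemma gram_diag: "gram n d (diag c) = (\<Sum>a\<in>monset n d. Poly_Mapping.single (a + a) (c a))"
proof -
  have "\<And>a b. Poly_Mapping.single (a + b) (diag c a b) = (if b = a then Poly_Mapping.single (a + a) (c a) else 0)"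
    by (auto simp: diag_def)
  then show ?thesis using finite_monset by (simp add: gram_def)
qed

lemma qf_diag: "finite S \<Longrightarrow> (\<Sum>a\<in>S. \<Sum>b\<in>S. x a * diag c a b * x b) = (\<Sum>a\<in>S. c a * (x a)^2)"
proof -
  assume fin: "finite S"
  have "(\<Sum>a\<in>S. \<Sum>b\<in>S. x a * diag c a b * x b) = (\<Sum>a\<in>S. \<Sum>b\<in>S. if b = a then c a * (x a)^2 else 0)"
    by (intro sum.cong refl) (auto simp: diag_def power2_eq_square)
  also have "\<dots> = (\<Sum>a\<in>S. c a * (x a)^2)" using fin by simp
  finally show ?thesis .
qed

lemma pd_id: "finite S \<Longrightarrow> pd_on S (diag (\<lambda>_. 1))"
proof -
  assume fin: "finite S"
  have "(\<Sum>a\<in>S. \<Sum>b\<in>S. x a * diag (\<lambda>_. 1) a b * x b) > 0" if "\<exists>a\<in>S. x a \<noteq> 0" for x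
  proof -
    have "(\<Sum>a\<in>S. (x a)^2) > 0" using that fin
      by (metis (mono_tags, lifting) power2_less_eq_zero_iff sum_pos2 zero_le_power2 not_le)
    then show ?thesis using qf_diag[OF fin, of x "\<lambda>_. 1"] by simp
  qed
  moreover have "symm_on S (diag (\<lambda>_. 1))" by (simp add: symm_on_def diag_def)
  ultimately show ?thesis by (simp add: pd_on_def)
qed

lemma psd_diag: "finite S \<Longrightarrow> \<forall>a\<in>S. c a \<ge> 0 \<Longrightarrow> psd_on S (diag c)"
proof -
  assume fin: "finite S" and c: "\<forall>a\<in>S. c a \<ge> 0"
  have "(\<Sum>a\<in>S. \<Sum>b\<in>S. x a * diag c a b * x b) \<ge> 0" for x
    using qf_diag[OF fin, of x c] c by (simp add: sum_nonneg)
  moreover have "symm_on S (diag c)" by (simp add: symm_on_def diag_def)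
  ultimately show ?thesis by (simp add: psd_on_def)
qed

lemma pd_add_psd: "pd_on S A \<Longrightarrow> psd_on S B \<Longrightarrow> pd_on S (\<lambda>a b. A a b + B a b)"
proof -
  assume A: "pd_on S A" and B: "psd_on S B"
  have "(\<Sum>a\<in>S. \<Sum>b\<in>S. x a * (A a b + B a b) * x b) > 0" if "\<exists>a\<in>S. x a \<noteq> 0" for x
  proof -
    have "(\<Sum>a\<in>S. \<Sum>b\<in>S. x a * (A a b + B a b) * x b) = (\<Sum>a\<in>S. \<Sum>b\<in>S. x a * A a b * x b) + (\<Sum>a\<in>S. \<Sum>b\<in>S. x a * B a b * x b)"
      by (simp add: algebra_simps sum.distrib)
    then show ?thesis using A B that by (simp add: pd_on_def psd_on_def add_pos_nonneg)
  qed
  moreover have "symm_on S (\<lambda>a b. A a b + B a b)" using A B by (simp add: pd_on_def psd_on_def symm_on_def)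
  ultimately show ?thesis unfolding pd_on_def by blast
qed

lemma sum_single_if: "finite S \<Longrightarrow> a \<in> S \<Longrightarrow> (\<Sum>b\<in>S. Poly_Mapping.single (f b) (if b = a then v else 0)) = Poly_Mapping.single (f a) (v::real)"
proof -
  assume "finite S" "a \<in> S"
  moreover have "\<And>b. Poly_Mapping.single (f b) (if b = a then v else 0) = (if b = a then Poly_Mapping.single (f a) v else 0)" by auto
  ultimately show ?thesis by simp
qed

lemma sqnorm_keys: "Poly_Mapping.keys (sqnorm n) \<subseteq> monset n 2"
  unfolding sqnorm_def xmon_def by (intro keys_sum_sub) (auto simp: monset_def)

lemma hdeg_ball: "hdeg (const R - sqnorm n) \<le> 1"
proof -
  have "Poly_Mapping.keys (const R - sqnorm n) \<subseteq> monset n 2"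
    by (intro keys_diff_sub keys_const sqnorm_keys)
  then have "pdeg (const R - sqnorm n) \<le> 2" by (auto simp: pdeg_le_iff monset_def)
  then show ?thesis by (simp add: hdeg_def)
qed

lemma hdeg_ball_pos:
  assumes "n > 0"
  shows "hdeg (const R - sqnorm n) = 1"
proof -
  let ?g = "const R - sqnorm n"
  let ?m = "Poly_Mapping.single (0::nat) (2::nat)"
  have ne: "?m \<noteq> 0" by (metis lookup_single_eq lookup_zero zero_neq_numeral)
  have inj: "Poly_Mapping.single i (2::nat) = ?m \<longleftrightarrow> i = 0" for i
    by (metis lookup_single_eq lookup_single_not_eq zero_neq_numeral)
  have "Poly_Mapping.lookup (sqnorm n) ?m = (\<Sum>i<n. if i = 0 then 1 else 0)"
    unfolding sqnorm_def xmon_def lookup_sum lookup_single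
    by (intro sum.cong refl) (auto simp: when_def inj inj[simplified])
  also have "\<dots> = 1" using assms by simp
  finally have "Poly_Mapping.lookup ?g ?m = - 1"
    using ne by (simp add: lookup_minus const_def lookup_single when_def)
  then have "?m \<in> Poly_Mapping.keys ?g" by (simp add: in_keys_iff)
  then have "2 \<le> pdeg ?g" unfolding pdeg_def
    by (metis (mono_tags, lifting) Max_ge finite_imageI finite_insert finite_keys image_eqI insertCI mdeg_single)
  moreover have "Poly_Mapping.keys ?g \<subseteq> monset n 2"
    by (intro keys_diff_sub keys_const sqnorm_keys)
  then have "pdeg ?g \<le> 2" by (auto simp: pdeg_le_iff monset_def)
  ultimately show ?thesis by (simp add: hdeg_def)
qed

lemma single_sum: "Poly_Mapping.single k (\<Sum>x\<in>S. f x) = (\<Sum>x\<in>S. Poly_Mapping.single k (f x :: real))"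
  by (induction S rule: infinite_finite_induct) (auto simp: single_add)

lemma ball_cert:
  assumes R: "R > 0" and d1: "n = 0 \<or> d1 + 1 = k" "d1 \<le> k"
  defines "\<epsilon> \<equiv> min 1 (1 / (2 * R))"
  shows "\<exists>\<theta>. (\<forall>\<beta>\<in>monset n k. \<theta> \<beta> \<ge> \<epsilon>^k / 2) \<and>
     const (R + 1) - (const R - sqnorm n) * gram n d1 (diag (\<lambda>\<alpha>. \<epsilon> ^ mdeg \<alpha>)) = gram n k (diag \<theta>)"
proof -
  define c where "c = (\<lambda>\<alpha>::monom. \<epsilon> ^ mdeg \<alpha>)"
  define e where "e = (\<lambda>i::nat. Poly_Mapping.single i (1::nat))"
  define D where "D = (\<lambda>\<beta>. \<Sum>i<n. \<Sum>\<alpha>\<in>monset n d1. if \<beta> = \<alpha> + e i then c \<alpha> else 0)"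
  define \<theta> where "\<theta> = (\<lambda>\<beta>. (if \<beta> = 0 then R + 1 else 0) + D \<beta> - (if \<beta> \<in> monset n d1 then R * c \<beta> else 0))"
  have eps: "\<epsilon> > 0" "\<epsilon> \<le> 1" "R * \<epsilon> \<le> 1 / 2" using R by (auto simp: \<epsilon>_def min_def field_simps)
  have c0: "c \<alpha> > 0" for \<alpha> using eps by (simp add: c_def)
  have D0: "D \<beta> \<ge> 0" for \<beta> unfolding D_def using c0 by (intro sum_nonneg) (auto intro: less_imp_le)
  have ein: "\<alpha> + e i \<in> monset n k" if "\<alpha> \<in> monset n d1" "i < n" for \<alpha> i
  proof -
    have "e i \<in> monset n 1" using that by (auto simp: e_def monset_def)
    from monset_add[OF that(1) this] have "\<alpha> + e i \<in> monset n (d1 + 1)" .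
    moreover have "d1 + 1 = k" using d1 that by auto
    ultimately show ?thesis by (auto simp: monset_def)
  qed
  let ?Mk = "monset n k" and ?Md = "monset n d1"
  have fk: "finite ?Mk" "finite ?Md" by (simp_all add: finite_monset)
  have T1: "(\<Sum>\<beta>\<in>?Mk. Poly_Mapping.single (\<beta> + \<beta>) (if \<beta> = 0 then R + 1 else 0)) = const (R + 1)"
    using sum_single_if[OF fk(1) zero_in_monset, of "\<lambda>b. b + b" "R + 1"] by (simp add: const_def)
  have T2: "(\<Sum>\<beta>\<in>?Mk. Poly_Mapping.single (\<beta> + \<beta>) (D \<beta>)) = sqnorm n * gram n d1 (diag c)"
  proof -
    have "(\<Sum>\<beta>\<in>?Mk. Poly_Mapping.single (\<beta> + \<beta>) (D \<beta>))
        = (\<Sum>\<beta>\<in>?Mk. \<Sum>i<n. \<Sum>\<alpha>\<in>?Md. Poly_Mapping.single (\<beta> + \<beta>) (if \<beta> = \<alpha> + e i then c \<alpha> else 0))"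
      by (simp add: D_def single_sum)
    also have "\<dots> = (\<Sum>i<n. \<Sum>\<alpha>\<in>?Md. \<Sum>\<beta>\<in>?Mk. Poly_Mapping.single (\<beta> + \<beta>) (if \<beta> = \<alpha> + e i then c \<alpha> else 0))"
      by (subst sum.swap) (simp add: sum.swap[of _ ?Mk])
    also have "\<dots> = (\<Sum>i<n. \<Sum>\<alpha>\<in>?Md. Poly_Mapping.single ((\<alpha> + e i) + (\<alpha> + e i)) (c \<alpha>))"
      by (intro sum.cong refl sum_single_if fk ein) auto
    also have "\<dots> = (\<Sum>i<n. \<Sum>\<alpha>\<in>?Md. xmon (Poly_Mapping.single i 2) * Poly_Mapping.single (\<alpha> + \<alpha>) (c \<alpha>))"
    proof (intro sum.cong refl)
      fix i \<alpha>
      have "Poly_Mapping.single i (2::nat) = e i + e i" by (simp add: e_def single_add[symmetric] numeral_2_eq_2)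
      then show "Poly_Mapping.single ((\<alpha> + e i) + (\<alpha> + e i)) (c \<alpha>) = xmon (Poly_Mapping.single i 2) * Poly_Mapping.single (\<alpha> + \<alpha>) (c \<alpha>)"
        by (simp add: xmon_def mult_single algebra_simps)
    qed
    also have "\<dots> = sqnorm n * gram n d1 (diag c)"
      by (simp add: sqnorm_def gram_diag sum_distrib_left sum_distrib_right) (rule sum.swap)
    finally show ?thesis .
  qed
  have T3: "(\<Sum>\<beta>\<in>?Mk. Poly_Mapping.single (\<beta> + \<beta>) (if \<beta> \<in> ?Md then R * c \<beta> else 0)) = const R * gram n d1 (diag c)"
  proof -
    have "(\<Sum>\<beta>\<in>?Mk. Poly_Mapping.single (\<beta> + \<beta>) (if \<beta> \<in> ?Md then R * c \<beta> else 0))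
        = (\<Sum>\<beta>\<in>?Mk. if \<beta> \<in> ?Md then Poly_Mapping.single (\<beta> + \<beta>) (R * c \<beta>) else 0)"
      by (intro sum.cong refl) auto
    also have "\<dots> = (\<Sum>\<beta>\<in>?Md. Poly_Mapping.single (\<beta> + \<beta>) (R * c \<beta>))"
      using monset_mono[OF d1(2), of n] fk by (simp add: sum.inter_restrict[symmetric] Int_absorb1)
    also have "\<dots> = const R * gram n d1 (diag c)"
      by (simp add: gram_diag sum_distrib_left const_mult_single)
    finally show ?thesis .
  qed
  have ident: "const (R + 1) - (const R - sqnorm n) * gram n d1 (diag c) = gram n k (diag \<theta>)"
  proof -
    have "gram n k (diag \<theta>) = (\<Sum>\<beta>\<in>?Mk. Poly_Mapping.single (\<beta> + \<beta>) (if \<beta> = 0 then R + 1 else 0))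
       + (\<Sum>\<beta>\<in>?Mk. Poly_Mapping.single (\<beta> + \<beta>) (D \<beta>))
       - (\<Sum>\<beta>\<in>?Mk. Poly_Mapping.single (\<beta> + \<beta>) (if \<beta> \<in> ?Md then R * c \<beta> else 0))"
      by (simp add: gram_diag \<theta>_def single_add single_diff sum.distrib sum_subtractf)
    then show ?thesis unfolding T1 T2 T3 by (simp add: algebra_simps)
  qed
  have bound: "\<theta> \<beta> \<ge> \<epsilon>^k / 2" if b: "\<beta> \<in> ?Mk" for \<beta>
  proof (cases "\<beta> = 0")
    case True
    have "\<epsilon>^k \<le> 1" using eps by (simp add: power_le_one)
    moreover have "\<theta> \<beta> = R + 1 + D 0 - R" using True by (simp add: \<theta>_def c_def)
    ultimately show ?thesis using D0[of 0] True by simp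
  next
    case False
    then obtain i where i: "i \<in> Poly_Mapping.keys \<beta>" by (metis ex_in_conv keys_eq_empty)
    have inn: "i < n" using i b by (auto simp: monset_def)
    define \<alpha> where "\<alpha> = \<beta> - e i"
    have lk: "Poly_Mapping.lookup \<beta> i \<ge> 1" using i by (simp add: in_keys_iff)
    have ba: "\<beta> = \<alpha> + e i"
      by (rule poly_mapping_eqI) (use lk in \<open>auto simp: \<alpha>_def e_def lookup_add lookup_minus lookup_single when_def\<close>)
    have mb: "mdeg \<beta> = mdeg \<alpha> + 1" using ba by (simp add: mdeg_add e_def)
    have ka: "Poly_Mapping.keys \<alpha> \<subseteq> Poly_Mapping.keys \<beta>"
      by (auto simp: \<alpha>_def in_keys_iff lookup_minus)
    have "d1 + 1 = k" using d1 inn by auto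
    then have am: "\<alpha> \<in> ?Md" using b ka mb by (auto simp: monset_def)
    have "D \<beta> \<ge> (\<Sum>\<alpha>'\<in>?Md. if \<beta> = \<alpha>' + e i then c \<alpha>' else 0)"
      unfolding D_def using inn c0 by (intro member_le_sum sum_nonneg) (auto intro: less_imp_le)
    moreover have "(\<Sum>\<alpha>'\<in>?Md. if \<beta> = \<alpha>' + e i then c \<alpha>' else 0) \<ge> c \<alpha>"
    proof -
      have "(\<Sum>\<alpha>'\<in>?Md. if \<beta> = \<alpha>' + e i then c \<alpha>' else 0) = (\<Sum>\<alpha>'\<in>?Md. if \<alpha>' = \<alpha> then c \<alpha>' else 0)"
        by (intro sum.cong refl) (auto simp: ba)
      then show ?thesis using am fk by simp
    qed
    ultimately have Db: "D \<beta> \<ge> \<epsilon> ^ mdeg \<alpha>" by (simp add: c_def)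
    have "(if \<beta> \<in> ?Md then R * c \<beta> else 0) \<le> R * \<epsilon> ^ mdeg \<beta>"
      using R eps by (auto simp: c_def)
    then have t1: "\<theta> \<beta> \<ge> \<epsilon> ^ mdeg \<alpha> - R * \<epsilon> ^ (mdeg \<alpha> + 1)"
      using Db False mb by (simp add: \<theta>_def)
    have t2: "\<epsilon> ^ mdeg \<alpha> - R * \<epsilon> ^ (mdeg \<alpha> + 1) = \<epsilon> ^ mdeg \<alpha> * (1 - R * \<epsilon>)" by (simp add: algebra_simps)
    have t3: "\<epsilon> ^ mdeg \<alpha> * (1 - R * \<epsilon>) \<ge> \<epsilon> ^ mdeg \<alpha> * (1 / 2)" using eps by (intro mult_left_mono) auto
    have t4: "\<epsilon> ^ mdeg \<alpha> \<ge> \<epsilon> ^ k"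
      using eps mb b by (intro power_decreasing) (auto simp: monset_def)
    show ?thesis using t1 t2 t3 t4 by linarith
  qed
  show ?thesis using ident bound unfolding c_def by blast
qed


lemma lin_zero: "lin n d (\<lambda>_. 0) = 0"
  by (simp add: lin_def)

lemma key_cert:
  assumes i1: "i1 < m" "g i1 = const R - sqnorm n" and R: "R > 0"
    and gv: "\<forall>i<m. in_vars n (g i) \<and> hdeg (g i) \<le> k"
    and p: "Poly_Mapping.keys p \<subseteq> monset n (2 * k)"
  shows "\<exists>T. \<forall>t\<ge>T. \<exists>G u. pd_on (monset n k) (G 0) \<and>
           (\<forall>i<m. pd_on (monset n (k - hdeg (g i))) (G (Suc i))) \<and>
           const t + p = rhs n g m h l k G u"
proof -
  define d1 where "d1 = k - hdeg (g i1)"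
  have hk: "hdeg (g i1) \<le> k" using gv i1 by auto
  have d1c: "n = 0 \<or> d1 + 1 = k"
  proof (cases "n = 0")
    case False
    then have "hdeg (g i1) = 1" using hdeg_ball_pos[of n R] i1 by simp
    then show ?thesis using hk by (simp add: d1_def)
  qed simp
  have d1k: "d1 \<le> k" by (simp add: d1_def)
  define \<epsilon> where "\<epsilon> = min 1 (1 / (2 * R))"
  have eps: "\<epsilon> > 0" using R by (simp add: \<epsilon>_def)
  define c where "c = (\<lambda>\<alpha>::monom. \<epsilon> ^ mdeg \<alpha>)"
  obtain \<theta> where th: "\<forall>\<beta>\<in>monset n k. \<theta> \<beta> \<ge> \<epsilon>^k / 2"
    and ident: "const (R + 1) - (const R - sqnorm n) * gram n d1 (diag c) = gram n k (diag \<theta>)"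
    using ball_cert[OF R d1c d1k] unfolding \<epsilon>_def c_def by blast
  define I where "I = diag (\<lambda>_. 1)"
  define q0 where "q0 = (\<Sum>i<m. g i * gram n (k - hdeg (g i)) I)"
  have kq0: "Poly_Mapping.keys q0 \<subseteq> monset n (2 * k)"
    unfolding q0_def using gv by (intro keys_sum_sub keys_loc_gram) auto
  obtain A where A: "symm_on (monset n k) A" "gram n k A = p - q0"
    using gram_repr[OF keys_diff_sub[OF p kq0]] by blast
  have epk: "\<epsilon>^k / 2 > 0" using eps by simp
  obtain T0 where T0: "\<And>s. s \<ge> T0 \<Longrightarrow> pd_on (monset n k) (\<lambda>a b. A a b + (if a = b then s * \<theta> a else 0))"
    using pd_perturb[OF finite_monset A(1) th epk] by blast
  show ?thesis
  proof (rule exI, intro allI impI)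
    fix t assume tT: "(R + 1) * max T0 0 \<le> t"
    define s where "s = t / (R + 1)"
    have "max T0 0 \<le> s" unfolding s_def using tT R by (subst pos_le_divide_eq) (auto simp: mult.commute)
    then have sT: "s \<ge> T0" "s \<ge> 0" by auto
    have ts: "t = s * (R + 1)" using R by (simp add: s_def)
    define G0 where "G0 = (\<lambda>a b. A a b + s * diag \<theta> a b)"
    define G where "G = (\<lambda>j. if j = 0 then G0 else if j = Suc i1 then (\<lambda>a b. I a b + s * diag c a b) else I)"
    define u :: "nat \<Rightarrow> monom \<Rightarrow> real" where "u = (\<lambda>_ _. 0)"
    have "G0 = (\<lambda>a b. A a b + (if a = b then s * \<theta> a else 0))"
      by (auto simp: G0_def diag_def fun_eq_iff)
    then have pd0: "pd_on (monset n k) (G 0)" using T0[OF sT(1)] by (simp add: G_def)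
    have pdi: "pd_on (monset n (k - hdeg (g i))) (G (Suc i))" for i
    proof (cases "i = i1")
      case True
      have "psd_on (monset n (k - hdeg (g i))) (\<lambda>a b. s * diag c a b)"
        using sT(2) eps by (intro psd_scale psd_diag finite_monset) (auto simp: c_def)
      then show ?thesis using True pd_add_psd[OF pd_id[OF finite_monset]]
        by (simp add: G_def I_def)
    next
      case False
      then show ?thesis using pd_id[OF finite_monset] by (simp add: G_def I_def)
    qed
    have gG: "g i * gram n (k - hdeg (g i)) (G (Suc i)) = g i * gram n (k - hdeg (g i)) I
        + (if i = i1 then const s * (g i1 * gram n d1 (diag c)) else 0)" for i
      by (simp add: G_def gram_add gram_scale d1_def algebra_simps)
    have sumG: "(\<Sum>i<m. g i * gram n (k - hdeg (g i)) (G (Suc i))) = q0 + const s * (g i1 * gram n d1 (diag c))"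
    proof -
      have "(\<Sum>i<m. g i * gram n (k - hdeg (g i)) (G (Suc i))) = (\<Sum>i<m. g i * gram n (k - hdeg (g i)) I
        + (if i = i1 then const s * (g i1 * gram n d1 (diag c)) else 0))"
        by (rule sum.cong[OF refl]) (rule gG)
      then show ?thesis using i1(1) by (simp add: sum.distrib q0_def)
    qed
    have g0: "gram n k (G 0) = gram n k A + const s * gram n k (diag \<theta>)"
    proof -
      have "G 0 = (\<lambda>a b. A a b + s * diag \<theta> a b)" by (simp add: G_def G0_def)
      then show ?thesis by (simp only: gram_add gram_scale)
    qed
    have "rhs n g m h l k G u = gram n k A + const s * gram n k (diag \<theta>) + q0 + const s * (g i1 * gram n d1 (diag c))"
      unfolding rhs_def sumG g0 by (simp add: u_def lin_zero)
    also have "\<dots> = p + const s * (gram n k (diag \<theta>) + g i1 * gram n d1 (diag c))"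
      using A(2) by (simp add: algebra_simps)
    also have "gram n k (diag \<theta>) + g i1 * gram n d1 (diag c) = const (R + 1)"
    proof -
      have "gram n k (diag \<theta>) = const (R + 1) - g i1 * gram n d1 (diag c)" using ident i1(2) by simp
      then show ?thesis by simp
    qed
    also have "p + const s * const (R + 1) = const t + p"
      by (simp add: const_mult_const ts add.commute)
    finally show "\<exists>G u. pd_on (monset n k) (G 0) \<and>
           (\<forall>i<m. pd_on (monset n (k - hdeg (g i))) (G (Suc i))) \<and>
           const t + p = rhs n g m h l k G u"
      using pd0 pdi by metis
  qed
qed


lemma Lfun_upd_out:
  assumes "b \<notin> Poly_Mapping.keys r"
  shows "Lfun (y(b := t)) r = Lfun y r"
  unfolding Lfun_def using assms by (intro sum.cong refl) auto

lemma const_keys_zero: "Poly_Mapping.keys q \<subseteq> {0} \<Longrightarrow> q = const (Poly_Mapping.lookup q 0)"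
  by (rule poly_mapping_eqI) (auto simp: const_def lookup_single when_def in_keys_iff)

lemma riesz:
  fixes Kp :: "mpoly \<Rightarrow> bool" and B :: "monom set"
  assumes finB: "finite B" and B0: "0 \<in> B"
    and add: "\<And>p q. Kp p \<Longrightarrow> Kp q \<Longrightarrow> Kp (p + q)"
    and scale: "\<And>p c. Kp p \<Longrightarrow> c \<ge> 0 \<Longrightarrow> Kp (const c * p)"
    and sub: "\<And>p. Kp p \<Longrightarrow> Poly_Mapping.keys p \<subseteq> B"
    and cof: "\<And>b. b \<in> B \<Longrightarrow> \<exists>t. Kp (const t - xmon b) \<and> Kp (const t + xmon b)"
    and noneg: "\<And>t. Kp (const t) \<Longrightarrow> t \<ge> 0"
  shows "\<exists>y. y 0 = 1 \<and> (\<forall>q. Kp q \<longrightarrow> Lfun y q \<ge> 0)"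
proof -
  have main: "F \<subseteq> B \<Longrightarrow> \<exists>y. y 0 = 1 \<and> (\<forall>q. Kp q \<and> Poly_Mapping.keys q \<subseteq> insert 0 F \<longrightarrow> Lfun y q \<ge> 0)"
    if "finite F" for F
    using that
  proof (induction F rule: finite_induct)
    case empty
    show ?case
    proof (intro exI conjI allI impI)
      fix q assume q: "Kp q \<and> Poly_Mapping.keys q \<subseteq> insert 0 {}"
      then have "q = const (Poly_Mapping.lookup q 0)" by (intro const_keys_zero) auto
      then have "Poly_Mapping.lookup q 0 \<ge> 0" using q noneg by metis
      then show "Lfun (\<lambda>_. 1) q \<ge> 0" using \<open>q = _\<close> by (metis Lfun_const mult_1_right)
    qed simp
  next
    case (insert b F)
    from insert obtain y where y0: "y 0 = 1"
      and yK: "\<And>q. Kp q \<Longrightarrow> Poly_Mapping.keys q \<subseteq> insert 0 F \<Longrightarrow> Lfun y q \<ge> 0" by auto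
    show ?case
    proof (cases "b = 0")
      case True
      then show ?thesis using y0 yK by auto
    next
      case False
      let ?D = "insert 0 F"
      have bD: "b \<notin> ?D" using False insert by auto
      have bB: "b \<in> B" using insert by auto
      define S1 where "S1 = {- Lfun y r | r. Poly_Mapping.keys r \<subseteq> ?D \<and> Kp (r + xmon b)}"
      define S2 where "S2 = {Lfun y r | r. Poly_Mapping.keys r \<subseteq> ?D \<and> Kp (r - xmon b)}"
      obtain t0 where t0: "Kp (const t0 - xmon b)" "Kp (const t0 + xmon b)" using cof[OF bB] by blast
      have kc: "Poly_Mapping.keys (const t0) \<subseteq> ?D" by (simp add: const_def)
      have S1ne: "S1 \<noteq> {}" unfolding S1_def using t0(2) kc by blast
      have S2ne: "S2 \<noteq> {}" unfolding S2_def using t0(1) kc by blast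
      have le: "a \<le> c" if aS: "a \<in> S1" and cS: "c \<in> S2" for a c
      proof -
        obtain r1 where r1: "a = - Lfun y r1" "Poly_Mapping.keys r1 \<subseteq> ?D" "Kp (r1 + xmon b)" using aS S1_def by blast
        obtain r2 where r2: "c = Lfun y r2" "Poly_Mapping.keys r2 \<subseteq> ?D" "Kp (r2 - xmon b)" using cS S2_def by blast
        have "Kp (r1 + r2)" using add[OF r1(3) r2(3)] by (simp add: algebra_simps)
        moreover have "Poly_Mapping.keys (r1 + r2) \<subseteq> ?D" using r1(2) r2(2) by (rule keys_add_sub)
        ultimately have "Lfun y (r1 + r2) \<ge> 0" by (rule yK)
        then show ?thesis using r1(1) r2(1) by (simp add: Lfun_add)
      qed
      define t where "t = Sup S1"
      have t1: "a \<le> t" if aS1: "a \<in> S1" for a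
      proof -
        obtain c where "c \<in> S2" using S2ne by blast
        then have "bdd_above S1" using le by (auto simp: bdd_above_def)
        then show ?thesis unfolding t_def using aS1 by (simp add: cSup_upper)
      qed
      have t2: "t \<le> c" if "c \<in> S2" for c
        unfolding t_def using S1ne le that by (intro cSup_least) auto
      define y' where "y' = y(b := t)"
      show ?thesis
      proof (intro exI conjI allI impI)
        show "y' 0 = 1" using y0 False by (simp add: y'_def)
      next
        fix q assume q: "Kp q \<and> Poly_Mapping.keys q \<subseteq> insert 0 (insert b F)"
        define \<sigma> where "\<sigma> = Poly_Mapping.lookup q b"
        define r where "r = q - Poly_Mapping.single b \<sigma>"
        have qr: "q = r + Poly_Mapping.single b \<sigma>" by (simp add: r_def)
        have kr: "Poly_Mapping.keys r \<subseteq> ?D"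
        proof
          fix a assume a: "a \<in> Poly_Mapping.keys r"
          then have "a \<noteq> b" by (auto simp: r_def in_keys_iff lookup_minus \<sigma>_def)
          moreover have "a \<in> Poly_Mapping.keys q"
            using a \<open>a \<noteq> b\<close> by (auto simp: r_def in_keys_iff lookup_minus lookup_single when_def)
          ultimately show "a \<in> ?D" using q by auto
        qed
        have brn: "b \<notin> Poly_Mapping.keys r" using kr bD by auto
        have Lr: "Lfun y' r = Lfun y r" unfolding y'_def by (rule Lfun_upd_out[OF brn])
        have Lq: "Lfun y' q = Lfun y r + \<sigma> * t"
          using Lr by (simp add: qr Lfun_add y'_def)
        have sc: "const x * q = const x * r + Poly_Mapping.single b (x * \<sigma>)" for x
          by (simp add: qr distrib_left const_mult_single)
        consider "\<sigma> > 0" | "\<sigma> < 0" | "\<sigma> = 0" by linarith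
        then show "Lfun y' q \<ge> 0"
        proof cases
          case 1
          have "Kp (const (1 / \<sigma>) * q)" using q 1 by (intro scale) auto
          moreover have "const (1 / \<sigma>) * q = const (1 / \<sigma>) * r + xmon b"
            using 1 by (simp add: sc xmon_def)
          moreover have "Poly_Mapping.keys (const (1 / \<sigma>) * r) \<subseteq> ?D" using kr keys_const_mult by blast
          ultimately have "- Lfun y (const (1 / \<sigma>) * r) \<in> S1" unfolding S1_def by (metis (mono_tags, lifting) mem_Collect_eq)
          then have "- (Lfun y r / \<sigma>) \<le> t" using t1 by (simp add: Lfun_const_mult)
          then have "- Lfun y r \<le> \<sigma> * t" using 1 by (simp add: field_simps)
          then show ?thesis using Lq by simp
        next
          case 2
          have "Kp (const (1 / - \<sigma>) * q)" using q 2 by (intro scale) auto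
          moreover have "const (1 / - \<sigma>) * q = const (1 / - \<sigma>) * r - xmon b"
            using 2 by (simp add: sc xmon_def single_uminus)
          moreover have "Poly_Mapping.keys (const (1 / - \<sigma>) * r) \<subseteq> ?D" using kr keys_const_mult by blast
          ultimately have "Lfun y (const (1 / - \<sigma>) * r) \<in> S2" unfolding S2_def by (metis (mono_tags, lifting) mem_Collect_eq)
          then have "t \<le> Lfun y r / - \<sigma>" using t2 by (simp add: Lfun_const_mult)
          then have "- \<sigma> * t \<le> Lfun y r" using 2 by (simp add: field_simps)
          then show ?thesis using Lq by simp
        next
          case 3
          then have "q = r" using qr by simp
          then have "Lfun y q \<ge> 0" using yK q kr by simp
          then show ?thesis using Lq 3 \<open>q = r\<close> by simp
        qed
      qed
    qed
  qed
  from main[OF finB order_refl] obtain y where "y 0 = 1"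
    "\<And>q. Kp q \<Longrightarrow> Poly_Mapping.keys q \<subseteq> insert 0 B \<Longrightarrow> Lfun y q \<ge> 0" by blast
  then show ?thesis using sub B0 by (metis insert_absorb)
qed


definition Kc :: "nat \<Rightarrow> (nat \<Rightarrow> mpoly) \<Rightarrow> nat \<Rightarrow> (nat \<Rightarrow> mpoly) \<Rightarrow> nat \<Rightarrow> nat \<Rightarrow> mpoly \<Rightarrow> bool" where
  "Kc n g m h l k p \<longleftrightarrow> (\<exists>G u. psd_on (monset n k) (G 0) \<and>
      (\<forall>i<m. psd_on (monset n (k - hdeg (g i))) (G (Suc i))) \<and> p = rhs n g m h l k G u)"

definition mfeas :: "nat \<Rightarrow> (nat \<Rightarrow> mpoly) \<Rightarrow> nat \<Rightarrow> (nat \<Rightarrow> mpoly) \<Rightarrow> nat \<Rightarrow> nat \<Rightarrow> (monom \<Rightarrow> real) \<Rightarrow> bool" where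
  "mfeas n g m h l k y \<longleftrightarrow> psd_on (monset n k) (\<lambda>\<alpha> \<beta>. y (\<alpha> + \<beta>)) \<and>
      y 0 = 1 \<and>
      (\<forall>i<m. psd_on (monset n (k - hdeg (g i))) (locm (g i) y)) \<and>
      (\<forall>j<l. \<forall>\<alpha>\<in>monset n (k - hdeg (h j)). \<forall>\<beta>\<in>monset n (k - hdeg (h j)).
           locm (h j) y \<alpha> \<beta> = 0)"

lemma rhs_add: "rhs n g m h l k (\<lambda>j a b. G j a b + G' j a b) (\<lambda>j a. u j a + u' j a) = rhs n g m h l k G u + rhs n g m h l k G' u'"
  by (simp add: rhs_def gram_add lin_add distrib_left sum.distrib algebra_simps)

lemma rhs_scale: "rhs n g m h l k (\<lambda>j a b. c * G j a b) (\<lambda>j a. c * u j a) = const c * rhs n g m h l k G u"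
  by (simp add: rhs_def gram_scale lin_scale distrib_left sum_distrib_left mult.left_commute)

lemma psd_zero: "psd_on S (\<lambda>a b. 0)"
  by (simp add: psd_on_def symm_on_def)

lemma Kc_add: "Kc n g m h l k p \<Longrightarrow> Kc n g m h l k q \<Longrightarrow> Kc n g m h l k (p + q)"
  unfolding Kc_def
proof (elim exE conjE)
  fix G u G' u'
  assume a: "psd_on (monset n k) (G 0)" "\<forall>i<m. psd_on (monset n (k - hdeg (g i))) (G (Suc i))" "p = rhs n g m h l k G u"
    and b: "psd_on (monset n k) (G' 0)" "\<forall>i<m. psd_on (monset n (k - hdeg (g i))) (G' (Suc i))" "q = rhs n g m h l k G' u'"
  show "\<exists>G u. psd_on (monset n k) (G 0) \<and> (\<forall>i<m. psd_on (monset n (k - hdeg (g i))) (G (Suc i))) \<and> p + q = rhs n g m h l k G u"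
    by (rule exI[of _ "\<lambda>j a b. G j a b + G' j a b"], rule exI[of _ "\<lambda>j a. u j a + u' j a"])
       (use a b in \<open>simp add: rhs_add psd_add\<close>)
qed

lemma Kc_scale: "Kc n g m h l k p \<Longrightarrow> c \<ge> 0 \<Longrightarrow> Kc n g m h l k (const c * p)"
  unfolding Kc_def
proof (elim exE conjE)
  fix G u
  assume a: "psd_on (monset n k) (G 0)" "\<forall>i<m. psd_on (monset n (k - hdeg (g i))) (G (Suc i))" "p = rhs n g m h l k G u"
    and c: "c \<ge> 0"
  show "\<exists>G u. psd_on (monset n k) (G 0) \<and> (\<forall>i<m. psd_on (monset n (k - hdeg (g i))) (G (Suc i))) \<and> const c * p = rhs n g m h l k G u"
    by (rule exI[of _ "\<lambda>j a b. c * G j a b"], rule exI[of _ "\<lambda>j a. c * u j a"])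
       (use a c in \<open>simp add: rhs_scale psd_scale\<close>)
qed

lemma rhs_zero: "rhs n g m h l k (\<lambda>_ _ _. 0) (\<lambda>_ _. 0) = 0"
  by (simp add: rhs_def gram_zero lin_zero)

lemma Kc_zero: "Kc n g m h l k 0"
  unfolding Kc_def using rhs_zero psd_zero by metis

lemma Kc_gram: "psd_on (monset n k) G \<Longrightarrow> Kc n g m h l k (gram n k G)"
proof -
  assume G: "psd_on (monset n k) G"
  let ?G = "\<lambda>j. if j = 0 then G else (\<lambda>a b. 0)"
  have e: "gram n k G = rhs n g m h l k ?G (\<lambda>_ _. 0)"
    by (simp add: rhs_def gram_zero lin_zero)
  have p0: "psd_on (monset n k) (?G 0)" using G by simp
  have pi: "\<forall>i<m. psd_on (monset n (k - hdeg (g i))) (?G (Suc i))" by (simp add: psd_zero)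
  show ?thesis unfolding Kc_def
    by (rule exI[where x = ?G], rule exI[where x = "\<lambda>_ _. 0"]) (use e p0 pi in blast)
qed

lemma Kc_loc:
  assumes i: "i < m" and G: "psd_on (monset n (k - hdeg (g i))) G"
  shows "Kc n g m h l k (g i * gram n (k - hdeg (g i)) G)"
proof -
  let ?G = "\<lambda>j. if j = Suc i then G else (\<lambda>a b. 0)"
  have "(\<Sum>i'<m. g i' * gram n (k - hdeg (g i')) (?G (Suc i'))) = (\<Sum>i'<m. if i' = i then g i * gram n (k - hdeg (g i)) G else 0)"
    by (intro sum.cong refl) (auto simp: gram_zero)
  also have "\<dots> = g i * gram n (k - hdeg (g i)) G" using i by simp
  finally have e: "rhs n g m h l k ?G (\<lambda>_ _. 0) = g i * gram n (k - hdeg (g i)) G"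
    by (simp add: rhs_def gram_zero lin_zero)
  have p0: "psd_on (monset n k) (?G 0)" by (simp add: psd_zero)
  have pi: "\<forall>i'<m. psd_on (monset n (k - hdeg (g i'))) (?G (Suc i'))" using G by (auto simp: psd_zero)
  show ?thesis unfolding Kc_def
    by (rule exI[where x = ?G], rule exI[where x = "\<lambda>_ _. 0"]) (use e p0 pi in simp)
qed

lemma Kc_h:
  assumes j: "j < l"
  shows "Kc n g m h l k (h j * lin n (2 * (k - hdeg (h j))) v)"
proof -
  let ?u = "\<lambda>j'. if j' = j then v else (\<lambda>_. 0)"
  have "(\<Sum>j'<l. h j' * lin n (2 * (k - hdeg (h j'))) (?u j')) = (\<Sum>j'<l. if j' = j then h j * lin n (2 * (k - hdeg (h j))) v else 0)"
    by (intro sum.cong refl) (auto simp: lin_zero)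
  also have "\<dots> = h j * lin n (2 * (k - hdeg (h j))) v" using j by simp
  finally have e: "rhs n g m h l k (\<lambda>_ _ _. 0) ?u = h j * lin n (2 * (k - hdeg (h j))) v"
    by (simp add: rhs_def gram_zero)
  show ?thesis unfolding Kc_def
    by (rule exI[where x = "\<lambda>_ _ _. 0"], rule exI[where x = ?u]) (use e psd_zero in simp)
qed

lemma weak_dual:
  assumes K: "Kc n g m h l k p" and y: "mfeas n g m h l k y"
  shows "Lfun y p \<ge> 0"
proof -
  from K obtain G u where G0: "psd_on (monset n k) (G 0)"
    and Gi: "\<forall>i<m. psd_on (monset n (k - hdeg (g i))) (G (Suc i))" and p: "p = rhs n g m h l k G u"
    unfolding Kc_def by blast
  have a: "Lfun y (gram n k (G 0)) \<ge> 0"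
    unfolding Lfun_gram using psd_trace[OF finite_monset G0] y by (simp add: mfeas_def)
  have b: "Lfun y (g i * gram n (k - hdeg (g i)) (G (Suc i))) \<ge> 0" if "i < m" for i
    unfolding Lfun_mult_gram using psd_trace[OF finite_monset] Gi y that by (simp add: mfeas_def)
  have c: "Lfun y (h j * lin n (2 * (k - hdeg (h j))) (u j)) = 0" if j: "j < l" for j
  proof -
    let ?d = "k - hdeg (h j)"
    have "(\<Sum>\<gamma>\<in>Poly_Mapping.keys (h j). Poly_Mapping.lookup (h j) \<gamma> * y (\<gamma> + \<alpha>)) = 0"
      if a: "\<alpha> \<in> monset n (2 * ?d)" for \<alpha>
    proof -
      from a have "\<alpha> \<in> monset n (?d + ?d)" by (simp add: mult_2)
      from monset_split[OF this] obtain \<alpha>1 \<alpha>2 where s: "\<alpha>1 \<in> monset n ?d" "\<alpha>2 \<in> monset n ?d" "\<alpha> = \<alpha>1 + \<alpha>2" by blast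
      then have "locm (h j) y \<alpha>1 \<alpha>2 = 0" using y j by (simp add: mfeas_def)
      then show ?thesis using s by (simp add: locm_def add.commute)
    qed
    then show ?thesis by (simp add: Lfun_mult_lin)
  qed
  have "Lfun y p = Lfun y (gram n k (G 0)) + (\<Sum>i<m. Lfun y (g i * gram n (k - hdeg (g i)) (G (Suc i))))
     + (\<Sum>j<l. Lfun y (h j * lin n (2 * (k - hdeg (h j))) (u j)))"
    by (simp add: p rhs_def Lfun_add Lfun_sum)
  also have "\<dots> \<ge> 0"
  proof -
    have s1: "(\<Sum>i<m. Lfun y (g i * gram n (k - hdeg (g i)) (G (Suc i)))) \<ge> 0"
      by (rule sum_nonneg) (use b in auto)
    have s2: "(\<Sum>j<l. Lfun y (h j * lin n (2 * (k - hdeg (h j))) (u j))) = 0" using c by simp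
    show ?thesis using a s1 s2 by linarith
  qed
  finally show ?thesis .
qed


lemma const_diff: "const (a - b) = const a - const b"
  by (simp add: const_def single_diff)

lemma const_zero: "const 0 = 0"
  by (simp add: const_def)

lemma const_uminus: "const (- a) = - const a"
  by (simp add: const_def single_uminus)

lemma alg1:
  "(f - const \<xi>0) + const lam * (const t - const s * (const \<rho> - f)) = const (1 + lam * s) * f - const (\<xi>0 - lam * (t - s * \<rho>))"
  by (simp add: const_diff const_add const_one const_mult_const[symmetric] algebra_simps)

lemma alg2:
  assumes "w \<noteq> 0"
  shows "const (1 / w) * (const w * f - const c) = f - const (c / w)"
proof -
  have "const (1 / w) * (const w * f - const c) = (const (1 / w) * const w) * f - const (1 / w) * const c"
    by (simp add: right_diff_distrib mult.assoc)
  also have "\<dots> = const (1 / w * w) * f - const (1 / w * c)" by (simp only: const_mult_const)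
  also have "\<dots> = f - const (c / w)" using assms by (simp add: const_one)
  finally show ?thesis .
qed


lemma Kc_keys:
  assumes gv: "\<forall>i<m. in_vars n (g i) \<and> hdeg (g i) \<le> k" and hv: "\<forall>j<l. in_vars n (h j) \<and> hdeg (h j) \<le> k"
  shows "Kc n g m h l k q \<Longrightarrow> Poly_Mapping.keys q \<subseteq> monset n (2 * k)"
  unfolding Kc_def using keys_rhs[OF gv hv] by blast

lemma strong:
  assumes gv: "\<forall>i<m. in_vars n (g i) \<and> hdeg (g i) \<le> k" and hv: "\<forall>j<l. in_vars n (h j) \<and> hdeg (h j) \<le> k"
    and kf: "Poly_Mapping.keys f \<subseteq> monset n (2 * k)"
    and i1: "i1 < m" "g i1 = const R - sqnorm n" and R: "R > 0"
    and X0: "Kc n g m h l k (f - const \<xi>0)"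
    and bdd: "bdd_above {\<xi>. Kc n g m h l k (f - const \<xi>)}"
  shows "\<exists>y. mfeas n g m h l k y \<and> Lfun y f \<le> Sup {\<xi>. Kc n g m h l k (f - const \<xi>)}"
proof -
  let ?X = "{\<xi>. Kc n g m h l k (f - const \<xi>)}"
  define \<rho> where "\<rho> = Sup ?X"
  have up: "\<xi> \<le> \<rho>" if "Kc n g m h l k (f - const \<xi>)" for \<xi>
    unfolding \<rho>_def using bdd that by (intro cSup_upper) auto
  define Kp where "Kp = (\<lambda>q. \<exists>q1 s. Kc n g m h l k q1 \<and> s \<ge> 0 \<and> q = q1 + const s * (const \<rho> - f))"
  have KcKp: "Kp q" if "Kc n g m h l k q" for q
    unfolding Kp_def using that by (intro exI[of _ q] exI[of _ 0]) (simp add: const_zero)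
  let ?B = "monset n (2 * k)"
  have "\<exists>y. y 0 = 1 \<and> (\<forall>q. Kp q \<longrightarrow> Lfun y q \<ge> 0)"
  proof (rule riesz[where B = ?B])
    show "finite ?B" by (rule finite_monset)
    show "0 \<in> ?B" by simp
  next
    fix p q assume "Kp p" "Kp q"
    then obtain p1 s1 q1 s2 where a: "Kc n g m h l k p1" "s1 \<ge> 0" "p = p1 + const s1 * (const \<rho> - f)"
      and b: "Kc n g m h l k q1" "s2 \<ge> 0" "q = q1 + const s2 * (const \<rho> - f)" unfolding Kp_def by blast
    have "p + q = (p1 + q1) + const (s1 + s2) * (const \<rho> - f)"
      unfolding a(3) b(3) by (simp add: const_add algebra_simps)
    then show "Kp (p + q)" unfolding Kp_def using a b Kc_add by (metis add_nonneg_nonneg)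
  next
    fix p c assume "Kp p" "(c::real) \<ge> 0"
    then obtain p1 s1 where a: "Kc n g m h l k p1" "s1 \<ge> 0" "p = p1 + const s1 * (const \<rho> - f)"
      unfolding Kp_def by blast
    have "const c * p = const c * p1 + const (c * s1) * (const \<rho> - f)"
      unfolding a(3) by (simp add: const_mult_const[symmetric] algebra_simps)
    then show "Kp (const c * p)" unfolding Kp_def using a Kc_scale \<open>c \<ge> 0\<close>
      by (metis mult_nonneg_nonneg)
  next
    fix p assume "Kp p"
    then obtain p1 s1 where a: "Kc n g m h l k p1" "s1 \<ge> 0" "p = p1 + const s1 * (const \<rho> - f)"
      unfolding Kp_def by blast
    have "Poly_Mapping.keys p1 \<subseteq> ?B" by (rule Kc_keys[OF gv hv a(1)])
    moreover have "Poly_Mapping.keys (const s1 * (const \<rho> - f)) \<subseteq> ?B"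
      using keys_const_mult keys_diff_sub[OF keys_const kf] by blast
    ultimately show "Poly_Mapping.keys p \<subseteq> ?B" using a(3) keys_add_sub by metis
  next
    fix b assume bB: "b \<in> ?B"
    have gv': "\<forall>i<m. in_vars n (g i) \<and> hdeg (g i) \<le> k" by (rule gv)
    obtain T1 where T1: "\<forall>t\<ge>T1. \<exists>G u. pd_on (monset n k) (G 0) \<and>
           (\<forall>i<m. pd_on (monset n (k - hdeg (g i))) (G (Suc i))) \<and>
           const t + xmon b = rhs n g m h l k G u"
      using key_cert[OF i1 R gv keys_xmon[OF bB], of h l] by blast
    obtain T2 where T2: "\<forall>t\<ge>T2. \<exists>G u. pd_on (monset n k) (G 0) \<and>
           (\<forall>i<m. pd_on (monset n (k - hdeg (g i))) (G (Suc i))) \<and>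
           const t + - xmon b = rhs n g m h l k G u"
      using key_cert[OF i1 R gv, of "- xmon b" h l] keys_xmon[OF bB] by auto
    define t where "t = max T1 T2"
    have "Kc n g m h l k (const t + xmon b)"
      using T1[rule_format, of t] unfolding Kc_def t_def by (metis max.cobounded1 pd_imp_psd)
    moreover have "Kc n g m h l k (const t + - xmon b)"
      using T2[rule_format, of t] unfolding Kc_def t_def by (metis max.cobounded2 pd_imp_psd)
    ultimately show "\<exists>t. Kp (const t - xmon b) \<and> Kp (const t + xmon b)"
      using KcKp by (metis diff_conv_add_uminus)
  next
    fix t assume "Kp (const t)"
    then obtain q1 s where a: "Kc n g m h l k q1" "s \<ge> 0" "const t = q1 + const s * (const \<rho> - f)"
      unfolding Kp_def by blast
    show "t \<ge> 0"
    proof (rule ccontr)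
      assume "\<not> t \<ge> 0"
      then have t0: "t < 0" by simp
      have x0r: "\<xi>0 \<le> \<rho>" by (rule up[OF X0])
      define lam where "lam = (\<rho> - \<xi>0) / (- t) + 1"
      have lam0: "lam > 0" using t0 x0r by (simp add: lam_def add_nonneg_pos)
      define w where "w = 1 + lam * s"
      have w0: "w > 0" using lam0 a(2) by (simp add: w_def add_pos_nonneg)
      have q1: "q1 = const t - const s * (const \<rho> - f)" using a(3) by simp
      have "Kc n g m h l k ((f - const \<xi>0) + const lam * q1)"
        using Kc_add[OF X0 Kc_scale[OF a(1)]] lam0 by simp
      also have "(f - const \<xi>0) + const lam * q1 = const w * f - const (\<xi>0 - lam * (t - s * \<rho>))"
        unfolding q1 w_def by (rule alg1)
      finally have "Kc n g m h l k (const (1 / w) * (const w * f - const (\<xi>0 - lam * (t - s * \<rho>))))"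
        using w0 by (intro Kc_scale) auto
      then have "Kc n g m h l k (f - const ((\<xi>0 - lam * (t - s * \<rho>)) / w))"
        using w0 by (simp add: alg2)
      then have le: "(\<xi>0 - lam * (t - s * \<rho>)) / w \<le> \<rho>" by (rule up)
      have "lam * (- t) = \<rho> - \<xi>0 + (- t)" using t0 by (simp add: lam_def field_simps)
      then have "\<xi>0 - lam * (t - s * \<rho>) > \<rho> * w" using t0 by (simp add: w_def algebra_simps)
      then have "(\<xi>0 - lam * (t - s * \<rho>)) / w > \<rho>" using w0 by (simp add: field_simps)
      then show False using le by simp
    qed
  qed
  then obtain y where y0: "y 0 = 1" and yK: "\<And>q. Kp q \<Longrightarrow> Lfun y q \<ge> 0" by blast
  have yKc: "Lfun y q \<ge> 0" if "Kc n g m h l k q" for q using yK KcKp that by blast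
  have mom: "psd_on (monset n k) (\<lambda>\<alpha> \<beta>. y (\<alpha> + \<beta>))"
  proof -
    have "(\<Sum>a\<in>monset n k. \<Sum>b\<in>monset n k. c a * y (a + b) * c b) \<ge> 0" for c
      using yKc[OF Kc_gram[OF psd_rank1[of "monset n k" c]]] by (simp add: Lfun_gram mult_ac)
    moreover have "symm_on (monset n k) (\<lambda>\<alpha> \<beta>. y (\<alpha> + \<beta>))" by (simp add: symm_on_def add.commute)
    ultimately show ?thesis by (simp add: psd_on_def)
  qed
  have loc: "psd_on (monset n (k - hdeg (g i))) (locm (g i) y)" if i: "i < m" for i
  proof -
    let ?S = "monset n (k - hdeg (g i))"
    have "(\<Sum>a\<in>?S. \<Sum>b\<in>?S. c a * locm (g i) y a b * c b) \<ge> 0" for c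
      using yKc[OF Kc_loc[of i m n k g, OF i psd_rank1[of ?S c], of h l]] by (simp add: Lfun_mult_gram mult_ac)
    moreover have "symm_on ?S (locm (g i) y)" by (simp add: symm_on_def locm_def add.commute)
    ultimately show ?thesis by (simp add: psd_on_def)
  qed
  have hz: "locm (h j) y \<alpha> \<beta> = 0" if j: "j < l" and a: "\<alpha> \<in> monset n (k - hdeg (h j))" and b: "\<beta> \<in> monset n (k - hdeg (h j))" for j \<alpha> \<beta>
  proof -
    let ?d = "2 * (k - hdeg (h j))"
    have ab: "\<alpha> + \<beta> \<in> monset n ?d" using monset_add[OF a b] by (simp add: mult_2)
    have e: "Lfun y (h j * lin n ?d (\<lambda>a'. c * (if a' = \<alpha> + \<beta> then 1 else 0))) = c * locm (h j) y \<alpha> \<beta>" for c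
    proof -
      have "Lfun y (h j * lin n ?d (\<lambda>a'. c * (if a' = \<alpha> + \<beta> then 1 else 0)))
          = (\<Sum>a'\<in>monset n ?d. if a' = \<alpha> + \<beta> then c * (\<Sum>\<gamma>\<in>Poly_Mapping.keys (h j). Poly_Mapping.lookup (h j) \<gamma> * y (\<gamma> + a')) else 0)"
        unfolding Lfun_mult_lin by (intro sum.cong refl) auto
      also have "\<dots> = c * locm (h j) y \<alpha> \<beta>" using ab finite_monset by (simp add: locm_def add.commute)
      finally show ?thesis .
    qed
    have "Lfun y (h j * lin n ?d (\<lambda>a'. c * (if a' = \<alpha> + \<beta> then 1 else 0))) \<ge> 0" for c
      by (rule yKc[OF Kc_h[OF j]])
    from this[of 1] this[of "-1"] show ?thesis unfolding e by simp
  qed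
  have mf: "mfeas n g m h l k y" unfolding mfeas_def using mom y0 loc hz by blast
  have "Kp (const \<rho> - f)" unfolding Kp_def
    by (intro exI[of _ 0] exI[of _ 1]) (simp add: Kc_zero const_one)
  then have "Lfun y (const \<rho> - f) \<ge> 0" by (rule yK)
  then have "Lfun y f \<le> \<rho>" using y0 by (simp add: Lfun_diff Lfun_const)
  then show ?thesis using mf unfolding \<rho>_def by blast
qed


theorem corollary1:
  fixes n m l :: nat and f :: mpoly and g h :: "nat \<Rightarrow> mpoly" and R :: real
  assumes "in_vars n f"
    and "\<forall>i<m. in_vars n (g i)"
    and "\<forall>j<l. in_vars n (h j)"
    and "R > 0"
    and "const R - sqnorm n \<in> g ` {..<m}"
  shows "\<forall>k. k \<ge> kmin f g m h l \<longrightarrow>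
           (\<exists>\<xi> G u. pd_on (monset n k) (G 0) \<and>
              (\<forall>i<m. pd_on (monset n (k - hdeg (g i))) (G (Suc i))) \<and>
              sos_cert n f g m h l k \<xi> G u)
           \<and> rho n f g m h l k = tau n f g m h l k"
proof (intro allI impI)
  fix k assume kk: "k \<ge> kmin f g m h l"
  let ?S = "{hdeg f} \<union> hdeg ` g ` {..<m} \<union> hdeg ` h ` {..<l}"
  have finS: "finite ?S" by simp
  have hf: "hdeg f \<le> k" using kk Max_ge[OF finS, of "hdeg f"] by (simp add: kmin_def)
  have gv: "\<forall>i<m. in_vars n (g i) \<and> hdeg (g i) \<le> k"
    using kk Max_ge[OF finS] assms(2) by (fastforce simp: kmin_def)
  have hv: "\<forall>j<l. in_vars n (h j) \<and> hdeg (h j) \<le> k"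
    using kk Max_ge[OF finS] assms(3) by (fastforce simp: kmin_def)
  obtain i1 where i1: "i1 < m" "g i1 = const R - sqnorm n" using assms(5) by auto
  have kf: "Poly_Mapping.keys f \<subseteq> monset n (2 * k)"
    using keys_monset[OF assms(1), of "2 * k"] pdeg_hdeg[of f] hf by simp
  obtain T where T: "\<forall>t\<ge>T. \<exists>G u. pd_on (monset n k) (G 0) \<and>
           (\<forall>i<m. pd_on (monset n (k - hdeg (g i))) (G (Suc i))) \<and>
           const t + f = rhs n g m h l k G u"
    using key_cert[OF i1 assms(4) gv kf, of h l] by blast
  obtain G u where G: "pd_on (monset n k) (G 0)" "\<forall>i<m. pd_on (monset n (k - hdeg (g i))) (G (Suc i))"
    "const T + f = rhs n g m h l k G u" using T by blast
  have sc: "sos_cert n f g m h l k (- T) G u"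
    using G(3) by (simp add: sos_cert_rhs const_uminus add.commute)
  have slater: "\<exists>\<xi> G u. pd_on (monset n k) (G 0) \<and>
              (\<forall>i<m. pd_on (monset n (k - hdeg (g i))) (G (Suc i))) \<and>
              sos_cert n f g m h l k \<xi> G u" using G sc by blast
  let ?X = "{\<xi>. Kc n g m h l k (f - const \<xi>)}"
  let ?Y = "{Lfun y f | y. mfeas n g m h l k y}"
  have rho: "rho n f g m h l k = Sup (ereal ` ?X)"
    unfolding rho_def Kc_def sos_cert_rhs by simp
  have tau: "tau n f g m h l k = Inf (ereal ` ?Y)"
    unfolding tau_def mfeas_def by simp
  have X0: "Kc n g m h l k (f - const (- T))"
    unfolding Kc_def using G sc pd_imp_psd by (metis sos_cert_rhs)
  have weak: "\<xi> \<le> Lfun y f" if "\<xi> \<in> ?X" "mfeas n g m h l k y" for \<xi> y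
  proof -
    have "Lfun y (f - const \<xi>) \<ge> 0" using weak_dual that by blast
    moreover have "y 0 = 1" using that by (simp add: mfeas_def)
    ultimately show ?thesis by (simp add: Lfun_diff Lfun_const)
  qed
  have "rho n f g m h l k = tau n f g m h l k"
  proof (cases "bdd_above ?X")
    case True
    obtain y where y: "mfeas n g m h l k y" "Lfun y f \<le> Sup ?X"
      using strong[OF gv hv kf i1 assms(4) X0 True] by blast
    have Xne: "?X \<noteq> {}" using X0 by blast
    have "Sup ?X \<le> Lfun y f" using Xne weak y(1) by (intro cSup_least) auto
    then have v: "Lfun y f = Sup ?X" using y(2) by simp
    have s1: "Sup (ereal ` ?X) \<le> ereal (Sup ?X)"
      using True by (intro SUP_least) (simp add: cSup_upper)
    have s2: "ereal (- T) \<le> Sup (ereal ` ?X)" using X0 by (intro SUP_upper) auto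
    have "ereal (Sup ?X) = Sup (ereal ` ?X)"
      by (rule ereal_Sup) (use s1 s2 in auto)
    then have r: "rho n f g m h l k = ereal (Sup ?X)" using rho by simp
    have t1: "Inf (ereal ` ?Y) \<le> ereal (Sup ?X)"
    proof -
      have "Lfun y f \<in> ?Y" using y(1) by blast
      then show ?thesis using v by (intro INF_lower2[of "Lfun y f"]) auto
    qed
    have t2: "ereal (Sup ?X) \<le> Inf (ereal ` ?Y)"
    proof (rule INF_greatest)
      fix v assume "v \<in> ?Y"
      then obtain y' where "v = Lfun y' f" "mfeas n g m h l k y'" by blast
      then show "ereal (Sup ?X) \<le> ereal v" using Xne weak by (auto intro!: cSup_least)
    qed
    show ?thesis using r tau t1 t2 by simp
  next
    case False
    have Yempty: "?Y = {}"
    proof (rule ccontr)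
      assume "?Y \<noteq> {}"
      then obtain y where "mfeas n g m h l k y" by blast
      then have "bdd_above ?X" using weak by (auto simp: bdd_above_def)
      then show False using False by simp
    qed
    have "tau n f g m h l k = \<infinity>" using tau Yempty by (simp add: top_ereal_def)
    moreover have "rho n f g m h l k = \<infinity>"
    proof -
      have "\<exists>i\<in>ereal ` ?X. x < i" if "x < \<infinity>" for x
      proof (cases x)
        case (real r)
        from False obtain \<xi> where "\<xi> \<in> ?X" "\<xi> > r" by (meson bdd_above.unfold not_le)
        then show ?thesis using real by auto
      next
        case PInf then show ?thesis using that by simp
      next
        case MInf then show ?thesis using X0 by auto
      qed
      then show ?thesis unfolding rho by (simp add: top_ereal_def[symmetric] Sup_eq_top_iff)
    qed
    ultimately show ?thesis by simp
  qed
  then show "(\<exists>\<xi> G u. pd_on (monset n k) (G 0) \<and>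
              (\<forall>i<m. pd_on (monset n (k - hdeg (g i))) (G (Suc i))) \<and>
              sos_cert n f g m h l k \<xi> G u)
           \<and> rho n f g m h l k = tau n f g m h l k" using slater by blast
qed


end
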